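(* Let $p\in[1,\infty]$, $\alpha\in[0,1]$ irrational with rational approximants $\alpha_m$, $\theta\in[0,1)$, $\lambda\in\mathbb{R}$ and $E\in\mathbb{R}$. Set $A_m:=H_{\lambda,\alpha_m,0}-E$ and $A:=H_{\lambda,\alpha,\theta}-E$. Then $\nu(A)=\lim_{m\to\infty}\nu(A_m)$.
   Context: $(H_{\lambda,\beta,\theta}x)_n=x_{n+1}+x_{n-1}+\lambda v_{\beta,\theta}(n)x_n$ on $\ell^p(\mathbb{Z})$ with $v_{\beta,\theta}(n)=\chi_{[1-\beta,1)}(n\beta+\theta\bmod 1)$, for any $\beta\in[0,1]$ (rational or irrational). Rational approximants: for $\alpha=[a_1,a_2,\dots]$, $p_{-1}=1,p_0=0,p_n=a_np_{n-1}+p_{n-2}$, $q_{-1}=0,q_0=1,q_n=a_nq_{n-1}+q_{n-2}$, $\alpha_m=p_m/q_m$. Lower norm: $\nu(A)=\inf\{\|Ax\|:\|x\|=1\}$. *)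

theory Defs
  imports "HOL-Analysis.Analysis"
begin

definition lp_mem :: "ereal \<Rightarrow> (int \<Rightarrow> complex) \<Rightarrow> bool" where
  "lp_mem p x \<longleftrightarrow>
     (if p = \<infinity> then bdd_above (range (\<lambda>n. norm (x n)))
      else (\<lambda>n. norm (x n) powr real_of_ereal p) summable_on UNIV)"

definition lp_norm :: "ereal \<Rightarrow> (int \<Rightarrow> complex) \<Rightarrow> real" where
  "lp_norm p x =
     (if p = \<infinity> then (SUP n. norm (x n))
      else (\<Sum>\<^sub>\<infinity>n. norm (x n) powr real_of_ereal p) powr (1 / real_of_ereal p))"

definition lower_norm :: "ereal \<Rightarrow> ((int \<Rightarrow> complex) \<Rightarrow> (int \<Rightarrow> complex)) \<Rightarrow> real" where
  "lower_norm p A = Inf {lp_norm p (A x) | x. lp_mem p x \<and> lp_norm p x = 1}"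

definition sturm_pot :: "real \<Rightarrow> real \<Rightarrow> int \<Rightarrow> real" where
  "sturm_pot \<beta> \<theta> n = indicator {1 - \<beta> ..< 1} (frac (of_int n * \<beta> + \<theta>))"

definition sturm_H :: "real \<Rightarrow> real \<Rightarrow> real \<Rightarrow> (int \<Rightarrow> complex) \<Rightarrow> (int \<Rightarrow> complex)" where
  "sturm_H lam \<beta> \<theta> x = (\<lambda>n. x (n + 1) + x (n - 1) + of_real (lam * sturm_pot \<beta> \<theta> n) * x n)"

definition sturm_A :: "real \<Rightarrow> real \<Rightarrow> real \<Rightarrow> real \<Rightarrow> (int \<Rightarrow> complex) \<Rightarrow> (int \<Rightarrow> complex)" where
  "sturm_A lam \<beta> \<theta> E x = (\<lambda>n. sturm_H lam \<beta> \<theta> x n - of_real E * x n)"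

definition gauss_map :: "real \<Rightarrow> real" where
  "gauss_map x = frac (1 / x)"

text \<open>cf_digit alpha n = a_n for n >= 1, where alpha = 1/(a_1 + 1/(a_2 + ...)).\<close>
definition cf_digit :: "real \<Rightarrow> nat \<Rightarrow> int" where
  "cf_digit \<alpha> n = floor (1 / (gauss_map ^^ (n - 1)) \<alpha>)"

text \<open>p_0 = 0, p_1 = a_1 p_0 + p_{-1} = 1, p_n = a_n p_{n-1} + p_{n-2};
      q_0 = 1, q_1 = a_1 q_0 + q_{-1} = a_1, q_n = a_n q_{n-1} + q_{n-2}.\<close>
fun cf_p :: "real \<Rightarrow> nat \<Rightarrow> int" where
  "cf_p \<alpha> 0 = 0"
| "cf_p \<alpha> (Suc 0) = 1"
| "cf_p \<alpha> (Suc (Suc n)) = cf_digit \<alpha> (Suc (Suc n)) * cf_p \<alpha> (Suc n) + cf_p \<alpha> n"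

fun cf_q :: "real \<Rightarrow> nat \<Rightarrow> int" where
  "cf_q \<alpha> 0 = 1"
| "cf_q \<alpha> (Suc 0) = cf_digit \<alpha> 1"
| "cf_q \<alpha> (Suc (Suc n)) = cf_digit \<alpha> (Suc (Suc n)) * cf_q \<alpha> (Suc n) + cf_q \<alpha> n"

definition cf_approx :: "real \<Rightarrow> nat \<Rightarrow> real" where
  "cf_approx \<alpha> m = real_of_int (cf_p \<alpha> m) / real_of_int (cf_q \<alpha> m)"

end

theory Submission
  imports Defs
begin


definition cft :: "real \<Rightarrow> nat \<Rightarrow> real" where
  "cft \<alpha> k = (gauss_map ^^ k) \<alpha>"

lemma cft_Suc: "cft \<alpha> (Suc k) = frac (1 / cft \<alpha> k)"
  by (simp add: cft_def gauss_map_def)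

lemma frac_irrat: assumes "x \<notin> \<rat>" shows "frac x \<notin> \<rat>"
proof
  assume "frac x \<in> \<rat>"
  then have "frac x + of_int \<lfloor>x\<rfloor> \<in> \<rat>" by (intro Rats_add) auto
  then have "x \<in> \<rat>" by (simp add: frac_def)
  then show False using assms by simp
qed

lemma cft_props:
  assumes "0 < \<alpha>" "\<alpha> < 1" "\<alpha> \<notin> \<rat>"
  shows "0 < cft \<alpha> k \<and> cft \<alpha> k < 1 \<and> cft \<alpha> k \<notin> \<rat>"
proof (induction k)
  case 0
  then show ?case using assms by (simp add: cft_def)
next
  case (Suc k)
  let ?x = "1 / cft \<alpha> k"
  have irr: "?x \<notin> \<rat>"
  proof
    assume "?x \<in> \<rat>"
    then have "1 / ?x \<in> \<rat>" by (rule Rats_divide[OF Rats_1])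
    then show False using Suc by simp
  qed
  have "frac ?x \<notin> \<rat>" using frac_irrat[OF irr] .
  moreover have "frac ?x \<noteq> 0" proof
    assume "frac ?x = 0"
    then have "frac ?x \<in> \<rat>" using Rats_0 by (simp only:)
    with calculation show False by simp
  qed
  moreover have "frac ?x \<ge> 0" "frac ?x < 1" by (simp_all add: frac_lt_1)
  ultimately have "frac ?x > 0 \<and> frac ?x < 1 \<and> frac ?x \<notin> \<rat>" by linarith
  then show ?case unfolding cft_Suc .
qed

lemma cf_digit_Suc: "cf_digit \<alpha> (Suc k) = \<lfloor>1 / cft \<alpha> k\<rfloor>"
  by (simp add: cf_digit_def cft_def)

lemma cft_rec: "1 / cft \<alpha> k = of_int (cf_digit \<alpha> (Suc k)) + cft \<alpha> (Suc k)"
  by (simp add: cf_digit_Suc cft_Suc frac_def)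

context
  fixes \<alpha> :: real
  assumes a0: "0 < \<alpha>" and a1: "\<alpha> < 1" and ai: "\<alpha> \<notin> \<rat>"
begin

lemma cft_pos: "0 < cft \<alpha> k" and cft_lt1: "cft \<alpha> k < 1"
  using cft_props[OF a0 a1 ai] by auto

lemma digit_ge1: "cf_digit \<alpha> (Suc k) \<ge> 1"
proof -
  have "1 / cft \<alpha> k \<ge> 1" using cft_pos[of k] cft_lt1[of k] by simp
  then have "\<lfloor>1::real\<rfloor> \<le> \<lfloor>1 / cft \<alpha> k\<rfloor>" by (rule floor_mono)
  then show ?thesis unfolding cf_digit_Suc by simp
qed

lemma q_props: "cf_q \<alpha> m \<ge> 1 \<and> cf_q \<alpha> (Suc m) \<ge> 1 \<and> cf_q \<alpha> (Suc m) \<ge> cf_q \<alpha> m \<and> cf_q \<alpha> m \<ge> int m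
   \<and> cf_q \<alpha> (Suc m) \<ge> int (Suc m)
   \<and> 0 \<le> cf_p \<alpha> m \<and> cf_p \<alpha> m \<le> cf_q \<alpha> m \<and> 0 \<le> cf_p \<alpha> (Suc m) \<and> cf_p \<alpha> (Suc m) \<le> cf_q \<alpha> (Suc m)"
proof (induction m)
  case 0
  then show ?case using digit_ge1[of 0] by simp
next
  case (Suc m)
  have d: "cf_digit \<alpha> (Suc (Suc m)) \<ge> 1" by (rule digit_ge1)
  have q: "cf_q \<alpha> (Suc (Suc m)) = cf_digit \<alpha> (Suc (Suc m)) * cf_q \<alpha> (Suc m) + cf_q \<alpha> m" by simp
  have p: "cf_p \<alpha> (Suc (Suc m)) = cf_digit \<alpha> (Suc (Suc m)) * cf_p \<alpha> (Suc m) + cf_p \<alpha> m" by simp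
  have m1: "cf_digit \<alpha> (Suc (Suc m)) * cf_q \<alpha> (Suc m) \<ge> cf_q \<alpha> (Suc m)"
    using d Suc by (simp add: mult_le_cancel_right1)
  have m2: "cf_digit \<alpha> (Suc (Suc m)) * cf_p \<alpha> (Suc m) \<le> cf_digit \<alpha> (Suc (Suc m)) * cf_q \<alpha> (Suc m)"
    using d Suc by (intro mult_left_mono) auto
  have m3: "cf_digit \<alpha> (Suc (Suc m)) * cf_p \<alpha> (Suc m) \<ge> 0" using d Suc by simp
  have IH: "cf_q \<alpha> m \<ge> 1" "cf_q \<alpha> (Suc m) \<ge> 1" "cf_q \<alpha> (Suc m) \<ge> int (Suc m)"
    "0 \<le> cf_p \<alpha> m" "cf_p \<alpha> m \<le> cf_q \<alpha> m" "0 \<le> cf_p \<alpha> (Suc m)" "cf_p \<alpha> (Suc m) \<le> cf_q \<alpha> (Suc m)"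
    using Suc.IH by auto
  have A: "cf_q \<alpha> (Suc (Suc m)) \<ge> 1" unfolding q using IH m1 by linarith
  have B: "cf_q \<alpha> (Suc (Suc m)) \<ge> cf_q \<alpha> (Suc m)" unfolding q using IH m1 by linarith
  have C: "cf_q \<alpha> (Suc (Suc m)) \<ge> int (Suc (Suc m))" unfolding q using IH m1 by linarith
  have D: "0 \<le> cf_p \<alpha> (Suc (Suc m))" unfolding p using IH m3 by linarith
  have E: "cf_p \<alpha> (Suc (Suc m)) \<le> cf_q \<alpha> (Suc (Suc m))" unfolding p q using IH m2 by linarith
  show ?case using IH A B C D E by blast
qed

lemma q_pos: "cf_q \<alpha> m \<ge> 1" and q_ge: "cf_q \<alpha> m \<ge> int m"
  and p_nonneg: "0 \<le> cf_p \<alpha> m" and p_le_q: "cf_p \<alpha> m \<le> cf_q \<alpha> m"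
  using q_props[of m] by auto

lemma approx_01: "0 \<le> cf_approx \<alpha> m" "cf_approx \<alpha> m \<le> 1"
  using q_pos[of m] p_nonneg[of m] p_le_q[of m] by (auto simp: cf_approx_def)

lemma det: "cf_p \<alpha> (Suc m) * cf_q \<alpha> m - cf_p \<alpha> m * cf_q \<alpha> (Suc m) = (-1) ^ m"
proof (induction m)
  case 0 then show ?case by simp
next
  case (Suc m)
  define a where "a = cf_digit \<alpha> (Suc (Suc m))"
  have "cf_p \<alpha> (Suc (Suc m)) * cf_q \<alpha> (Suc m) - cf_p \<alpha> (Suc m) * cf_q \<alpha> (Suc (Suc m))
     = (a * cf_p \<alpha> (Suc m) + cf_p \<alpha> m) * cf_q \<alpha> (Suc m) - cf_p \<alpha> (Suc m) * (a * cf_q \<alpha> (Suc m) + cf_q \<alpha> m)"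
    by (simp add: a_def)
  also have "\<dots> = - (cf_p \<alpha> (Suc m) * cf_q \<alpha> m - cf_p \<alpha> m * cf_q \<alpha> (Suc m))"
    by (simp add: algebra_simps)
  also have "\<dots> = (-1) ^ Suc m" using Suc.IH by simp
  finally show ?case .
qed

lemma conv_formula:
  "\<alpha> = (cf_p \<alpha> (Suc m) + cft \<alpha> (Suc m) * cf_p \<alpha> m) / (cf_q \<alpha> (Suc m) + cft \<alpha> (Suc m) * cf_q \<alpha> m)"
proof (induction m)
  case 0
  have "cft \<alpha> 0 = \<alpha>" by (simp add: cft_def)
  then have e: "of_int (cf_digit \<alpha> (Suc 0)) + cft \<alpha> (Suc 0) = 1 / \<alpha>" using cft_rec[of \<alpha> 0] by simp
  then have e2: "cft \<alpha> (Suc 0) + of_int (cf_digit \<alpha> (Suc 0)) = 1 / \<alpha>" by (simp add: add.commute)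
  show ?case by (simp add: e e2)
next
  case (Suc m)
  define t where "t = cft \<alpha> (Suc m)"
  define t2 where "t2 = cft \<alpha> (Suc (Suc m))"
  define a where "a = real_of_int (cf_digit \<alpha> (Suc (Suc m)))"
  have tpos: "t > 0" using cft_pos by (simp add: t_def)
  have t2pos: "t2 > 0" using cft_pos by (simp add: t2_def)
  have ta: "1 / t = a + t2" using cft_rec[of \<alpha> "Suc m"] by (simp add: t_def t2_def a_def)
  have apos: "a \<ge> 1" using digit_ge1[of "Suc m"] by (simp add: a_def)
  have ta': "a + t2 = 1 / t" using ta by simp
  have tt: "t = 1 / (a + t2)" by (simp only: ta') simp
  define P1 where "P1 = real_of_int (cf_p \<alpha> (Suc m))"
  define P0 where "P0 = real_of_int (cf_p \<alpha> m)"
  define Q1 where "Q1 = real_of_int (cf_q \<alpha> (Suc m))"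
  define Q0 where "Q0 = real_of_int (cf_q \<alpha> m)"
  have Q1p: "Q1 \<ge> 1" using q_pos by (simp add: Q1_def)
  have Q0p: "Q0 \<ge> 1" using q_pos by (simp add: Q0_def)
  have IH: "\<alpha> = (P1 + t * P0) / (Q1 + t * Q0)" using Suc by (simp add: P1_def P0_def Q1_def Q0_def t_def)
  have c: "a + t2 > 0" using apos t2pos by simp
  have n: "(a + t2) * (P1 + t * P0) = (a + t2) * P1 + P0" unfolding tt using c by (simp add: distrib_left)
  have dd: "(a + t2) * (Q1 + t * Q0) = (a + t2) * Q1 + Q0" unfolding tt using c by (simp add: distrib_left)
  have "(P1 + t * P0) / (Q1 + t * Q0) = ((a + t2) * (P1 + t * P0)) / ((a + t2) * (Q1 + t * Q0))"
    by (metis c less_irrefl mult_divide_mult_cancel_left)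
  also have "\<dots> = ((a + t2) * P1 + P0) / ((a + t2) * Q1 + Q0)" by (simp only: n dd)
  finally have "(P1 + t * P0) / (Q1 + t * Q0) = ((a + t2) * P1 + P0) / ((a + t2) * Q1 + Q0)" .
  then have "\<alpha> = (a * P1 + P0 + t2 * P1) / (a * Q1 + Q0 + t2 * Q1)" using IH by (simp add: algebra_simps)
  note th = this
  have e1: "real_of_int (cf_p \<alpha> (Suc (Suc m))) = a * P1 + P0" by (simp add: a_def P1_def P0_def)
  have e2: "real_of_int (cf_q \<alpha> (Suc (Suc m))) = a * Q1 + Q0" by (simp add: a_def Q1_def Q0_def)
  have "\<alpha> = (real_of_int (cf_p \<alpha> (Suc (Suc m))) + t2 * P1) / (real_of_int (cf_q \<alpha> (Suc (Suc m))) + t2 * Q1)"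
    unfolding e1 e2 by (rule th)
  then show ?case by (simp only: P1_def Q1_def t2_def)
qed

lemma approx_err: "\<bar>\<alpha> - cf_approx \<alpha> (Suc m)\<bar> \<le> 1 / (real_of_int (cf_q \<alpha> (Suc m)))^2"
proof -
  define t where "t = cft \<alpha> (Suc m)"
  define P1 where "P1 = real_of_int (cf_p \<alpha> (Suc m))"
  define P0 where "P0 = real_of_int (cf_p \<alpha> m)"
  define Q1 where "Q1 = real_of_int (cf_q \<alpha> (Suc m))"
  define Q0 where "Q0 = real_of_int (cf_q \<alpha> m)"
  have tpos: "t > 0" and t1: "t < 1" using cft_pos cft_lt1 by (auto simp: t_def)
  have Q1p: "Q1 \<ge> 1" using q_pos by (simp add: Q1_def)
  have Q0p: "Q0 \<ge> 1" using q_pos by (simp add: Q0_def)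
  have d: "\<bar>P1 * Q0 - P0 * Q1\<bar> = 1"
  proof -
    have "real_of_int (cf_p \<alpha> (Suc m) * cf_q \<alpha> m - cf_p \<alpha> m * cf_q \<alpha> (Suc m)) = real_of_int ((-1) ^ m)"
      using det[of m] by (simp only:)
    then have "P1 * Q0 - P0 * Q1 = (-1) ^ m" unfolding P1_def Q0_def P0_def Q1_def by simp
    then show ?thesis by simp
  qed
  have al: "\<alpha> = (P1 + t * P0) / (Q1 + t * Q0)" using conv_formula[of m]
    by (simp add: P1_def P0_def Q1_def Q0_def t_def)
  have pos: "Q1 + t * Q0 > 0" using tpos Q1p Q0p by (simp add: add_pos_pos)
  have "\<alpha> - P1 / Q1 = ((P1 + t * P0) * Q1 - P1 * (Q1 + t * Q0)) / ((Q1 + t * Q0) * Q1)"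
    unfolding al using pos Q1p by (simp add: diff_frac_eq)
  also have "(P1 + t * P0) * Q1 - P1 * (Q1 + t * Q0) = t * (P0 * Q1 - P1 * Q0)" by (simp add: algebra_simps)
  also have "(Q1 + t * Q0) * Q1 = Q1 * (Q1 + t * Q0)" by simp
  finally have "\<alpha> - P1 / Q1 = t * (P0 * Q1 - P1 * Q0) / (Q1 * (Q1 + t * Q0))" .
  then have "\<bar>\<alpha> - P1 / Q1\<bar> = t / (Q1 * (Q1 + t * Q0))"
    using d tpos pos Q1p by (simp add: abs_mult abs_minus_commute)
  also have "\<dots> \<le> 1 / (Q1 * Q1)"
  proof -
    have h1: "Q1 * Q1 * t \<le> Q1 * Q1 * 1" using t1 Q1p by (intro mult_left_mono) auto
    have h2: "0 \<le> Q1 * t * Q0" using tpos Q1p Q0p by simp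
    have "t * (Q1 * Q1) \<le> 1 * (Q1 * (Q1 + t * Q0))"
      using h1 h2 by (simp add: algebra_simps)
    then show ?thesis using pos Q1p tpos by (simp add: divide_simps)
  qed
  finally show ?thesis by (simp add: cf_approx_def P1_def Q1_def power2_eq_square)
qed

lemma mesh:
  fixes s :: real
  obtains k j :: int where "s \<le> k * cf_approx \<alpha> m - j" "k * cf_approx \<alpha> m - j < s + 1 / cf_q \<alpha> m"
proof -
  define q where "q = cf_q \<alpha> m"
  define pp where "pp = cf_p \<alpha> m"
  have qp: "q \<ge> 1" using q_pos by (simp add: q_def)
  define u where "u = - ((-1) ^ m * cf_q \<alpha> (Suc m))"
  define sg where "sg = ((-1::int) ^ m)"
  have sq: "sg * sg = 1" unfolding sg_def by (simp flip: power_mult_distrib)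
  have D: "cf_p \<alpha> (Suc m) * q = sg + pp * cf_q \<alpha> (Suc m)" using det[of m] by (simp add: q_def pp_def sg_def)
  have D2: "sg * (cf_p \<alpha> (Suc m) * q) = sg * sg + sg * (pp * cf_q \<alpha> (Suc m))" unfolding D by (simp add: distrib_left)
  have "u * pp = - (sg * (pp * cf_q \<alpha> (Suc m)))" by (simp add: u_def sg_def)
  also have "\<dots> = 1 - sg * (cf_p \<alpha> (Suc m) * q)" using D2 sq by linarith
  finally have up: "u * pp = 1 - (-1) ^ m * cf_p \<alpha> (Suc m) * q" by (simp add: sg_def mult.assoc)
  define r where "r = \<lceil>s * q\<rceil>"
  define k where "k = u * r"
  define j where "j = - (r * (-1) ^ m * cf_p \<alpha> (Suc m))"
  have "k * pp = r * (u * pp)" by (simp add: k_def ac_simps)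
  also have "\<dots> = r - r * (-1) ^ m * cf_p \<alpha> (Suc m) * q" using up by (simp add: right_diff_distrib ac_simps)
  finally have "real_of_int (k * pp) = real_of_int (r - r * (-1) ^ m * cf_p \<alpha> (Suc m) * q)" by (simp only:)
  then have "real_of_int k * pp = r - r * (-1) ^ m * cf_p \<alpha> (Suc m) * q" by simp
  then have "real_of_int k * (pp / q) = r / q + j" using qp
    by (simp add: j_def field_simps)
  then have e: "k * cf_approx \<alpha> m - j = r / q" by (simp add: cf_approx_def q_def pp_def)
  have "s * q \<le> r" "r < s * q + 1" unfolding r_def by linarith+
  then have "s \<le> r / q" "r / q < s + 1 / q" using qp by (auto simp: field_simps)
  then show ?thesis using that[of k j] e by (simp add: q_def)
qed

end


definition fsupp :: "int set \<Rightarrow> (int \<Rightarrow> complex) \<Rightarrow> bool" where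
  "fsupp S x \<longleftrightarrow> finite S \<and> (\<forall>n. n \<notin> S \<longrightarrow> x n = 0)"

lemma real_p_ge1: "1 \<le> p \<Longrightarrow> p \<noteq> \<infinity> \<Longrightarrow> real_of_ereal p \<ge> 1"
  by (cases p) auto

lemma lp_fin:
  assumes "p \<noteq> \<infinity>" "1 \<le> p" "fsupp S x"
  shows "lp_mem p x" "lp_norm p x = (\<Sum>n\<in>S. norm (x n) powr real_of_ereal p) powr (1 / real_of_ereal p)"
proof -
  have fin: "finite S" and z: "\<And>n. n \<notin> S \<Longrightarrow> x n = 0" using assms(3) by (auto simp: fsupp_def)
  have "(\<lambda>n. norm (x n) powr real_of_ereal p) summable_on UNIV \<longleftrightarrow> (\<lambda>n. norm (x n) powr real_of_ereal p) summable_on S"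
    by (rule summable_on_cong_neutral) (auto simp: z)
  then show "lp_mem p x" using fin assms(1) by (simp add: lp_mem_def)
  have "infsum (\<lambda>n. norm (x n) powr real_of_ereal p) UNIV = infsum (\<lambda>n. norm (x n) powr real_of_ereal p) S"
    by (rule infsum_cong_neutral) (auto simp: z)
  then show "lp_norm p x = (\<Sum>n\<in>S. norm (x n) powr real_of_ereal p) powr (1 / real_of_ereal p)"
    using fin assms(1) by (simp add: lp_norm_def)
qed

lemma fsupp_bdd: "fsupp S x \<Longrightarrow> bdd_above (range (\<lambda>n. norm (x n)))"
proof -
  assume a: "fsupp S x"
  have "range (\<lambda>n. norm (x n)) \<subseteq> insert 0 ((\<lambda>n. norm (x n)) ` S)" using a by (auto simp: fsupp_def)
  moreover have "finite (insert 0 ((\<lambda>n. norm (x n)) ` S))" using a by (simp add: fsupp_def)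
  ultimately show ?thesis by (meson bdd_above_finite bdd_above_mono)
qed

lemma lp_inf_mem: "bdd_above (range (\<lambda>n. norm (x n))) \<Longrightarrow> lp_mem \<infinity> x"
  by (simp add: lp_mem_def)

lemma sup_upper: assumes "bdd_above (range (\<lambda>n. norm (x n)))" shows "norm (x n) \<le> lp_norm \<infinity> x"
  unfolding lp_norm_def using cSUP_upper[OF UNIV_I assms] by simp

lemma sup_least: "(\<And>n. norm (x n) \<le> B) \<Longrightarrow> lp_norm \<infinity> x \<le> B"
  unfolding lp_norm_def by (simp add: cSUP_least)

lemma sup_nonneg: "bdd_above (range (\<lambda>n. norm (x n))) \<Longrightarrow> 0 \<le> lp_norm \<infinity> x"
  using sup_upper[of x 0] norm_ge_zero[of "x 0"] by linarith

lemma wconv: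
  fixes r t u w :: real
  assumes r: "r \<ge> 1" and t: "0 \<le> t" "t \<le> 1" and u: "u \<ge> 0" and w: "w \<ge> 0"
  shows "(t * u + (1 - t) * w) powr r \<le> t * u powr r + (1 - t) * w powr r"
proof (cases "u = 0 \<or> w = 0")
  case True
  have key: "s powr r \<le> s" if "0 \<le> s" "s \<le> 1" for s :: real
  proof -
    have "s powr r \<le> s powr 1" using powr_mono'[of 1 r s] that r by simp
    then show ?thesis using that by simp
  qed
  show ?thesis
  proof (cases "u = 0")
    case True
    have "((1 - t) * w) powr r = (1 - t) powr r * w powr r" using t w by (simp add: powr_mult)
    also have "\<dots> \<le> (1 - t) * w powr r" using key[of "1 - t"] t by (intro mult_right_mono) auto
    finally show ?thesis using True by simp
  next
    case False
    then have w0: "w = 0" using \<open>u = 0 \<or> w = 0\<close> by simp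
    have "(t * u) powr r = t powr r * u powr r" using t u by (simp add: powr_mult)
    also have "\<dots> \<le> t * u powr r" using key[of t] t by (intro mult_right_mono) auto
    finally show ?thesis using w0 by simp
  qed
next
  case False
  then have "u \<in> {0<..}" "w \<in> {0<..}" using u w by auto
  from convex_onD[OF powr_convex[OF r], of "1 - t" u w, OF _ _ this] t
  show ?thesis by (simp add: algebra_simps)
qed

lemma minkowski:
  fixes f g :: "'a \<Rightarrow> real"
  assumes fin: "finite S" and r: "r \<ge> 1" and f0: "\<And>i. f i \<ge> 0" and g0: "\<And>i. g i \<ge> 0"
  shows "(\<Sum>i\<in>S. (f i + g i) powr r) powr (1/r) \<le> (\<Sum>i\<in>S. f i powr r) powr (1/r) + (\<Sum>i\<in>S. g i powr r) powr (1/r)"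
proof -
  define A where "A = (\<Sum>i\<in>S. f i powr r) powr (1/r)"
  define B where "B = (\<Sum>i\<in>S. g i powr r) powr (1/r)"
  have SA: "(\<Sum>i\<in>S. f i powr r) = A powr r" unfolding A_def using r
    by (simp add: powr_powr sum_nonneg)
  have SB: "(\<Sum>i\<in>S. g i powr r) = B powr r" unfolding B_def using r
    by (simp add: powr_powr sum_nonneg)
  have A0: "A \<ge> 0" "B \<ge> 0" by (simp_all add: A_def B_def)
  show ?thesis
  proof (cases "A = 0 \<or> B = 0")
    case True
    show ?thesis
    proof (cases "A = 0")
      case True
      then have "(\<Sum>i\<in>S. f i powr r) = 0" using SA r by simp
      then have "\<forall>i\<in>S. f i powr r = 0" using fin by (subst (asm) sum_nonneg_eq_0_iff) auto
      then have "\<forall>i\<in>S. f i = 0" by simp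
      then have "(\<Sum>i\<in>S. (f i + g i) powr r) = (\<Sum>i\<in>S. g i powr r)" by simp
      then show ?thesis using True by (simp add: B_def A_def[symmetric])
    next
      case False
      then have Bz: "B = 0" using \<open>A = 0 \<or> B = 0\<close> by simp
      then have "(\<Sum>i\<in>S. g i powr r) = 0" using SB r by simp
      then have "\<forall>i\<in>S. g i powr r = 0" using fin by (subst (asm) sum_nonneg_eq_0_iff) auto
      then have "\<forall>i\<in>S. g i = 0" by simp
      then have "(\<Sum>i\<in>S. (f i + g i) powr r) = (\<Sum>i\<in>S. f i powr r)" by simp
      then show ?thesis using Bz by (simp add: A_def B_def[symmetric])
    qed
  next
    case False
    then have Ap: "A > 0" and Bp: "B > 0" using A0 by auto
    define t where "t = A / (A + B)"
    have t01: "0 < t" "t < 1" using Ap Bp by (auto simp: t_def field_simps)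
    have omt: "1 - t = B / (A + B)" using Ap Bp by (simp add: t_def field_simps)
    have pt: "(f i + g i) powr r \<le> t powr (1 - r) * f i powr r + (1 - t) powr (1 - r) * g i powr r" for i
    proof -
      have "f i + g i = t * (f i / t) + (1 - t) * (g i / (1 - t))" using t01 by simp
      then have "(f i + g i) powr r \<le> t * (f i / t) powr r + (1 - t) * (g i / (1 - t)) powr r"
        using wconv[OF r, of t "f i / t" "g i / (1 - t)"] t01 f0[of i] g0[of i] by simp
      also have "t * (f i / t) powr r = t powr (1 - r) * f i powr r"
        using t01 f0[of i] by (simp add: powr_divide powr_diff)
      also have "(1 - t) * (g i / (1 - t)) powr r = (1 - t) powr (1 - r) * g i powr r"
        using t01 g0[of i] by (simp add: powr_divide powr_diff)
      finally show ?thesis .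
    qed
    have "(\<Sum>i\<in>S. (f i + g i) powr r) \<le> (\<Sum>i\<in>S. t powr (1 - r) * f i powr r + (1 - t) powr (1 - r) * g i powr r)"
      by (rule sum_mono) (rule pt)
    also have "\<dots> = t powr (1 - r) * A powr r + (1 - t) powr (1 - r) * B powr r"
      by (simp add: sum.distrib SA SB flip: sum_distrib_left)
    also have "t powr (1 - r) * A powr r = A * (A + B) powr (r - 1)"
    proof -
      have "t powr (1 - r) = A powr (1 - r) / (A + B) powr (1 - r)" unfolding t_def using Ap Bp by (simp add: powr_divide)
      also have "\<dots> = A powr (1 - r) * (A + B) powr (r - 1)" using Ap Bp
        by (simp add: powr_minus_divide[symmetric] divide_inverse powr_minus[symmetric])
      finally have "t powr (1 - r) * A powr r = A powr (1 - r) * A powr r * (A + B) powr (r - 1)" by simp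
      also have "A powr (1 - r) * A powr r = A" using Ap by (simp add: powr_add[symmetric])
      finally show ?thesis .
    qed
    also have "(1 - t) powr (1 - r) * B powr r = B * (A + B) powr (r - 1)"
    proof -
      have "(1 - t) powr (1 - r) = B powr (1 - r) / (A + B) powr (1 - r)" unfolding omt using Ap Bp by (simp add: powr_divide)
      also have "\<dots> = B powr (1 - r) * (A + B) powr (r - 1)" using Ap Bp
        by (simp add: powr_minus_divide[symmetric] divide_inverse powr_minus[symmetric])
      finally have "(1 - t) powr (1 - r) * B powr r = B powr (1 - r) * B powr r * (A + B) powr (r - 1)" by simp
      also have "B powr (1 - r) * B powr r = B" using Bp by (simp add: powr_add[symmetric])
      finally show ?thesis .
    qed
    also have "A * (A + B) powr (r - 1) + B * (A + B) powr (r - 1) = (A + B) powr r"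
    proof -
      have "A * (A + B) powr (r - 1) + B * (A + B) powr (r - 1) = (A + B) * (A + B) powr (r - 1)" by (simp add: algebra_simps)
      also have "\<dots> = (A + B) powr r" using Ap Bp by (simp add: powr_mult_base)
      finally show ?thesis .
    qed
    finally have le: "(\<Sum>i\<in>S. (f i + g i) powr r) \<le> (A + B) powr r" .
    have "(\<Sum>i\<in>S. (f i + g i) powr r) powr (1/r) \<le> ((A + B) powr r) powr (1/r)"
      using le r by (intro powr_mono2) (auto intro: sum_nonneg)
    also have "\<dots> = A + B" using Ap Bp r by (simp add: powr_powr)
    finally show ?thesis by (simp add: A_def B_def)
  qed
qed

lemma minkowski_c:
  fixes x y :: "'a \<Rightarrow> complex"
  assumes fin: "finite S" and r: "r \<ge> 1"
  shows "(\<Sum>i\<in>S. norm (x i + y i) powr r) powr (1/r) \<le> (\<Sum>i\<in>S. norm (x i) powr r) powr (1/r) + (\<Sum>i\<in>S. norm (y i) powr r) powr (1/r)"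
proof -
  have "(\<Sum>i\<in>S. norm (x i + y i) powr r) \<le> (\<Sum>i\<in>S. (norm (x i) + norm (y i)) powr r)"
    using r by (intro sum_mono powr_mono2) (auto intro: norm_triangle_ineq)
  then have "(\<Sum>i\<in>S. norm (x i + y i) powr r) powr (1/r) \<le> (\<Sum>i\<in>S. (norm (x i) + norm (y i)) powr r) powr (1/r)"
    using r by (intro powr_mono2) (auto intro: sum_nonneg)
  also have "\<dots> \<le> (\<Sum>i\<in>S. norm (x i) powr r) powr (1/r) + (\<Sum>i\<in>S. norm (y i) powr r) powr (1/r)"
    by (rule minkowski[OF fin r]) auto
  finally show ?thesis .
qed


definition Aop :: "real \<Rightarrow> real \<Rightarrow> (int \<Rightarrow> real) \<Rightarrow> (int \<Rightarrow> complex) \<Rightarrow> (int \<Rightarrow> complex)" where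
  "Aop lam E v x = (\<lambda>n. x (n + 1) + x (n - 1) + of_real (lam * v n) * x n - of_real E * x n)"

lemma sturm_A_Aop: "sturm_A lam \<beta> \<theta> E = Aop lam E (sturm_pot \<beta> \<theta>)"
  by (intro ext) (simp add: sturm_A_def sturm_H_def Aop_def)

definition bnd :: "(int \<Rightarrow> real) \<Rightarrow> bool" where "bnd v \<longleftrightarrow> (\<forall>n. \<bar>v n\<bar> \<le> 1)"

lemma sturm_pot_bnd: "bnd (sturm_pot \<beta> \<theta>)"
  by (simp add: bnd_def sturm_pot_def indicator_def)

lemma Aop_fsupp: "fsupp {a..b} y \<Longrightarrow> fsupp {a-1..b+1} (Aop lam E v y)"
  by (auto simp: fsupp_def Aop_def)

lemma Aop_scale: "Aop lam E v (\<lambda>n. c * y n) = (\<lambda>n. c * Aop lam E v y n)"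
  by (intro ext) (simp add: Aop_def algebra_simps)

lemma Aop_shift:
  assumes "\<forall>n\<in>S. w (n + k) = v n" "fsupp S y"
  shows "Aop lam E w (\<lambda>n. y (n - k)) = (\<lambda>n. Aop lam E v y (n - k))"
proof (intro ext)
  fix n
  have "of_real (lam * w n) * y (n - k) = of_real (lam * v (n - k)) * y (n - k)"
  proof (cases "n - k \<in> S")
    case True
    then have "w n = v (n - k)" using assms(1) by (metis diff_add_cancel)
    then show ?thesis by simp
  next
    case False
    then show ?thesis using assms(2) by (simp add: fsupp_def)
  qed
  then show "Aop lam E w (\<lambda>n. y (n - k)) n = Aop lam E v y (n - k)"
    by (simp add: Aop_def algebra_simps)
qed

lemma range_shift: "range (\<lambda>n. f (n - k :: int)) = range f"
proof (intro equalityI subsetI)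
  fix y assume "y \<in> range f"
  then obtain m where "y = f m" by auto
  then have "y = f ((m + k) - k)" by simp
  then show "y \<in> range (\<lambda>n. f (n - k))" by blast
qed auto

lemma bij_shift: "bij_betw (\<lambda>n::int. n - k) UNIV UNIV"
  by (rule bij_betwI[where g = "\<lambda>n. n + k"]) auto

lemma lp_shift:
  "lp_norm p (\<lambda>n. x (n - k)) = lp_norm p x" "lp_mem p (\<lambda>n. x (n - k)) = lp_mem p x"
proof -
  have r: "range (\<lambda>n. norm (x (n - k))) = range (\<lambda>n. norm (x n))"
    using range_shift[of "\<lambda>n. norm (x n)" k] by simp
  have i: "infsum (\<lambda>n. norm (x (n - k)) powr real_of_ereal p) UNIV = infsum (\<lambda>n. norm (x n) powr real_of_ereal p) UNIV"
    using infsum_reindex_bij_betw[OF bij_shift[of k], of "\<lambda>n. norm (x n) powr real_of_ereal p"] by simp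
  have s: "(\<lambda>n. norm (x (n - k)) powr real_of_ereal p) summable_on UNIV \<longleftrightarrow> (\<lambda>n. norm (x n) powr real_of_ereal p) summable_on UNIV"
    using summable_on_reindex_bij_betw[OF bij_shift[of k], of "\<lambda>n. norm (x n) powr real_of_ereal p"] by simp
  show "lp_norm p (\<lambda>n. x (n - k)) = lp_norm p x" unfolding lp_norm_def r i by simp
  show "lp_mem p (\<lambda>n. x (n - k)) = lp_mem p x" unfolding lp_mem_def r s by simp
qed

lemma lp_shift_plus:
  "lp_norm p (\<lambda>n. x (n + k)) = lp_norm p x" "lp_mem p (\<lambda>n. x (n + k)) = lp_mem p x"
  using lp_shift[of p x "-k"] by simp_all

lemma lp_nonneg: assumes "lp_mem p x" shows "0 \<le> lp_norm p x"
proof (cases "p = \<infinity>")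
  case True
  then show ?thesis using sup_nonneg[of x] assms by (simp add: lp_mem_def)
next
  case False
  then show ?thesis by (simp add: lp_norm_def)
qed

lemma lp_scale:
  fixes c :: complex
  assumes "lp_mem p x" and p1: "1 \<le> p"
  shows "lp_mem p (\<lambda>n. c * x n)" "lp_norm p (\<lambda>n. c * x n) = norm c * lp_norm p x"
proof -
  show "lp_norm p (\<lambda>n. c * x n) = norm c * lp_norm p x"
  proof (cases "p = \<infinity>")
    case True
    have b: "bdd_above (range (\<lambda>n. norm (x n)))" using assms True by (simp add: lp_mem_def)
    show ?thesis
    proof (cases "c = 0")
      case True
      then show ?thesis using \<open>p = \<infinity>\<close> by (simp add: lp_norm_def)
    next
      case False
      have le1: "lp_norm p (\<lambda>n. c * x n) \<le> norm c * lp_norm p x"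
        unfolding True by (rule sup_least) (simp add: norm_mult mult_left_mono sup_upper[OF b])
      from b obtain M where M: "\<And>n. norm (x n) \<le> M" by (auto simp: bdd_above_def)
      have "norm (c * x n) \<le> norm c * M" for n using M[of n] by (simp add: norm_mult mult_left_mono)
      then have bc: "bdd_above (range (\<lambda>n. norm (c * x n)))" by (intro bdd_aboveI) auto
      have "norm (x n) \<le> lp_norm p (\<lambda>n. c * x n) / norm c" for n
        using sup_upper[OF bc, of n] False unfolding True by (simp add: norm_mult field_simps)
      then have "lp_norm p x \<le> lp_norm p (\<lambda>n. c * x n) / norm c" unfolding True by (rule sup_least)
      then have "norm c * lp_norm p x \<le> lp_norm p (\<lambda>n. c * x n)" using False by (simp add: field_simps)
      then show ?thesis using le1 by simp
    qed
  next
    case False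
    have "infsum (\<lambda>n. norm (c * x n) powr real_of_ereal p) UNIV = norm c powr real_of_ereal p * infsum (\<lambda>n. norm (x n) powr real_of_ereal p) UNIV"
      by (simp add: norm_mult powr_mult infsum_cmult_right')
    have r1: "real_of_ereal p \<ge> 1" using real_p_ge1[OF p1 False] .
    have "lp_norm p (\<lambda>n. c * x n) = (norm c powr real_of_ereal p * infsum (\<lambda>n. norm (x n) powr real_of_ereal p) UNIV) powr (1 / real_of_ereal p)"
      using False \<open>infsum _ _ = _\<close> by (simp add: lp_norm_def)
    also have "\<dots> = (norm c powr real_of_ereal p) powr (1 / real_of_ereal p) * (infsum (\<lambda>n. norm (x n) powr real_of_ereal p) UNIV) powr (1 / real_of_ereal p)"
      by (rule powr_mult)
    also have "(norm c powr real_of_ereal p) powr (1 / real_of_ereal p) = norm c"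
      using r1 by (simp add: powr_powr)
    finally show ?thesis using False by (simp add: lp_norm_def)
  qed
  show "lp_mem p (\<lambda>n. c * x n)"
  proof (cases "p = \<infinity>")
    case True
    have b: "bdd_above (range (\<lambda>n. norm (x n)))" using assms True by (simp add: lp_mem_def)
    from b obtain M where M: "\<And>n. norm (x n) \<le> M" by (auto simp: bdd_above_def)
    have "norm (c * x n) \<le> norm c * M" for n using M[of n] by (simp add: norm_mult mult_left_mono)
    then have bc: "bdd_above (range (\<lambda>n. norm (c * x n)))" by (intro bdd_aboveI) auto
    then show ?thesis using True unfolding lp_mem_def by simp
  next
    case False
    have "(\<lambda>n. norm c powr real_of_ereal p * norm (x n) powr real_of_ereal p) summable_on UNIV"
      using assms False by (intro summable_on_cmult_right) (simp add: lp_mem_def)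
    then show ?thesis using False by (simp add: lp_mem_def norm_mult powr_mult)
  qed
qed

lemma tri_pow:
  fixes u v w r :: real
  assumes "u \<ge> 0" "v \<ge> 0" "w \<ge> 0" "r \<ge> 1"
  shows "(u + v + w) powr r \<le> 3 powr r * (u powr r + v powr r + w powr r)"
proof -
  define M where "M = max u (max v w)"
  have "u + v + w \<le> 3 * M" by (simp add: M_def)
  then have "(u + v + w) powr r \<le> (3 * M) powr r" using assms by (intro powr_mono2) auto
  also have "\<dots> = 3 powr r * M powr r" using assms by (simp add: powr_mult M_def)
  also have "M powr r \<le> u powr r + v powr r + w powr r" by (simp add: M_def max_def)
  then have "3 powr r * M powr r \<le> 3 powr r * (u powr r + v powr r + w powr r)" by (intro mult_left_mono) auto
  finally show ?thesis .
qed

lemma Aop_pt: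
  assumes "bnd v"
  shows "norm (Aop lam E v x n) \<le> norm (x (n + 1)) + norm (x (n - 1)) + (\<bar>lam\<bar> + \<bar>E\<bar>) * norm (x n)"
proof -
  have "norm (of_real (lam * v n) * x n - of_real E * x n) \<le> norm (of_real (lam * v n) * x n) + norm (of_real E * x n)"
    by (rule norm_triangle_ineq4)
  also have "\<dots> \<le> \<bar>lam\<bar> * norm (x n) + \<bar>E\<bar> * norm (x n)"
  proof -
    have "\<bar>lam\<bar> * \<bar>v n\<bar> \<le> \<bar>lam\<bar>" using assms by (simp add: bnd_def mult_left_le)
    then have "\<bar>lam\<bar> * \<bar>v n\<bar> * norm (x n) \<le> \<bar>lam\<bar> * norm (x n)" by (intro mult_right_mono) auto
    then show ?thesis by (simp add: norm_mult abs_mult)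
  qed
  finally have h: "norm (of_real (lam * v n) * x n - of_real E * x n) \<le> (\<bar>lam\<bar> + \<bar>E\<bar>) * norm (x n)"
    by (simp add: algebra_simps)
  have "norm (Aop lam E v x n) \<le> norm (x (n + 1)) + norm (x (n - 1)) + norm (of_real (lam * v n) * x n - of_real E * x n)"
    unfolding Aop_def by (metis (no_types, lifting) add_diff_eq norm_triangle_le norm_triangle_ineq add_mono order_refl)
  then show ?thesis using h by linarith
qed

lemma Aop_mem:
  assumes "bnd v" "lp_mem p x" "1 \<le> p"
  shows "lp_mem p (Aop lam E v x)"
proof (cases "p = \<infinity>")
  case True
  have b: "bdd_above (range (\<lambda>n. norm (x n)))" using assms True by (simp add: lp_mem_def)
  then obtain B where B: "\<And>n. norm (x n) \<le> B" by (auto simp: bdd_above_def)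
  have "norm (Aop lam E v x n) \<le> B + B + (\<bar>lam\<bar> + \<bar>E\<bar>) * B" for n
    using Aop_pt[OF assms(1), of lam E x n] B[of "n+1"] B[of "n - 1"] B[of n]
      mult_left_mono[OF B[of n], of "\<bar>lam\<bar> + \<bar>E\<bar>"] by simp
  then show ?thesis using True by (auto simp: lp_mem_def bdd_above_def)
next
  case False
  define r where "r = real_of_ereal p"
  have r1: "r \<ge> 1" using real_p_ge1[OF assms(3) False] by (simp add: r_def)
  define C where "C = \<bar>lam\<bar> + \<bar>E\<bar>"
  have s0: "(\<lambda>n. norm (x n) powr r) summable_on UNIV" using assms(2) False by (simp add: lp_mem_def r_def)
  have s1: "(\<lambda>n. norm (x (n + 1)) powr r) summable_on UNIV"
    using lp_shift_plus(2)[of p x 1] assms(2) False by (simp add: lp_mem_def r_def)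
  have s2: "(\<lambda>n. norm (x (n - 1)) powr r) summable_on UNIV"
    using lp_shift(2)[of p x 1] assms(2) False by (simp add: lp_mem_def r_def)
  have sg: "(\<lambda>n. 3 powr r * (norm (x (n + 1)) powr r + norm (x (n - 1)) powr r + C powr r * norm (x n) powr r)) summable_on UNIV"
    by (intro summable_on_cmult_right summable_on_add s1 s2 s0)
  have "(\<lambda>n. norm (Aop lam E v x n) powr r) summable_on UNIV"
  proof (rule summable_on_comparison_test[OF sg])
    fix n :: int
    have "norm (Aop lam E v x n) powr r \<le> (norm (x (n + 1)) + norm (x (n - 1)) + C * norm (x n)) powr r"
      using Aop_pt[OF assms(1), of lam E x n] r1 by (intro powr_mono2) (auto simp: C_def)
    also have "\<dots> \<le> 3 powr r * (norm (x (n + 1)) powr r + norm (x (n - 1)) powr r + (C * norm (x n)) powr r)"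
      using r1 by (intro tri_pow) (auto simp: C_def)
    also have "(C * norm (x n)) powr r = C powr r * norm (x n) powr r" by (simp add: powr_mult C_def)
    finally show "norm (Aop lam E v x n) powr r \<le> 3 powr r * (norm (x (n + 1)) powr r + norm (x (n - 1)) powr r + C powr r * norm (x n) powr r)" .
  qed auto
  then show ?thesis using False by (simp add: lp_mem_def r_def)
qed

definition nu :: "ereal \<Rightarrow> real \<Rightarrow> real \<Rightarrow> (int \<Rightarrow> real) \<Rightarrow> real" where
  "nu p lam E v = lower_norm p (Aop lam E v)"

definition delta0 :: "int \<Rightarrow> complex" where "delta0 = (\<lambda>n. if n = 0 then 1 else 0)"

lemma delta0_props:
  assumes "1 \<le> p"
  shows "lp_mem p delta0" "lp_norm p delta0 = 1"
proof -
  have fs: "fsupp {0} delta0" by (simp add: fsupp_def delta0_def)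
  show "lp_mem p delta0"
  proof (cases "p = \<infinity>")
    case True then show ?thesis using fsupp_bdd[OF fs] by (simp add: lp_mem_def)
  next
    case False then show ?thesis using lp_fin[OF False assms fs] by simp
  qed
  show "lp_norm p delta0 = 1"
  proof (cases "p = \<infinity>")
    case True
    have "lp_norm p delta0 \<le> 1" unfolding True by (rule sup_least) (simp add: delta0_def)
    moreover have "norm (delta0 0) \<le> lp_norm p delta0" unfolding True by (rule sup_upper[OF fsupp_bdd[OF fs]])
    ultimately show ?thesis by (simp add: delta0_def)
  next
    case False then show ?thesis using lp_fin[OF False assms fs] by (simp add: delta0_def)
  qed
qed

context
  fixes p :: ereal and lam E :: real and v :: "int \<Rightarrow> real"
  assumes p1: "1 \<le> p" and bv: "bnd v"
begin

definition NS where "NS = {lp_norm p (Aop lam E v x) | x. lp_mem p x \<and> lp_norm p x = 1}"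

lemma NS_ne: "NS \<noteq> {}"
  using delta0_props[OF p1] unfolding NS_def by blast

lemma NS_bdd: "bdd_below NS"
  unfolding NS_def bdd_below_def using lp_nonneg Aop_mem[OF bv _ p1] by blast

lemma nu_eq: "nu p lam E v = Inf NS"
  by (simp add: nu_def lower_norm_def NS_def)

lemma nu_nonneg: "0 \<le> nu p lam E v"
  unfolding nu_eq using NS_ne by (rule cInf_greatest) (auto simp: NS_def intro: lp_nonneg Aop_mem[OF bv _ p1])

lemma nu_le:
  assumes "lp_mem p y" "lp_norm p y > 0"
  shows "nu p lam E v \<le> lp_norm p (Aop lam E v y) / lp_norm p y"
proof -
  define c where "c = complex_of_real (1 / lp_norm p y)"
  define x where "x = (\<lambda>n. c * y n)"
  have nc: "norm c = 1 / lp_norm p y" using assms unfolding c_def by (simp only: norm_of_real) simp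
  have "lp_mem p x" "lp_norm p x = 1" using lp_scale[OF assms(1) p1, of c] nc assms by (simp_all add: x_def)
  moreover have "Aop lam E v x = (\<lambda>n. c * Aop lam E v y n)" by (simp add: x_def Aop_scale)
  then have "lp_norm p (Aop lam E v x) = lp_norm p (Aop lam E v y) / lp_norm p y"
    using lp_scale(2)[OF Aop_mem[OF bv assms(1) p1] p1, of c] nc by simp
  ultimately have "lp_norm p (Aop lam E v y) / lp_norm p y \<in> NS"
    unfolding NS_def by (metis (mono_tags, lifting) mem_Collect_eq)
  then show ?thesis unfolding nu_eq by (rule cInf_lower[OF _ NS_bdd])
qed

lemma nu_approx:
  assumes "\<epsilon> > 0"
  obtains x where "lp_mem p x" "lp_norm p x = 1" "lp_norm p (Aop lam E v x) < nu p lam E v + \<epsilon>"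
proof -
  have "Inf NS < nu p lam E v + \<epsilon>" using assms by (simp add: nu_eq)
  then obtain s where "s \<in> NS" "s < nu p lam E v + \<epsilon>" using cInf_lessD[OF NS_ne] by blast
  then show ?thesis using that unfolding NS_def by blast
qed

end


definition tri :: "nat \<Rightarrow> int \<Rightarrow> int \<Rightarrow> real" where
  "tri L n0 n = max 0 (1 - \<bar>real_of_int (n - n0)\<bar> / real L)"

lemma tri_ge0: "0 \<le> tri L n0 n" by (simp add: tri_def)
lemma tri_le1: "tri L n0 n \<le> 1" by (simp add: tri_def)
lemma tri_center: "tri L n0 n0 = 1" by (simp add: tri_def)
lemma tri_zero: "L > 0 \<Longrightarrow> n \<notin> {n0 - int L..n0 + int L} \<Longrightarrow> tri L n0 n = 0"
proof -
  assume L: "L > 0" and n: "n \<notin> {n0 - int L..n0 + int L}"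
  then have "\<bar>real_of_int (n - n0)\<bar> \<ge> real L" by auto
  then have "\<bar>real_of_int (n - n0)\<bar> / real L \<ge> 1" using L by simp
  then show ?thesis by (simp add: tri_def)
qed

lemma max_lip: "\<bar>max 0 u - max 0 w\<bar> \<le> \<bar>u - w :: real\<bar>"
  by (auto simp: max_def abs_if)

lemma tri_lip: assumes "L > 0" shows "\<bar>tri L n0 m - tri L n0 n\<bar> \<le> \<bar>real_of_int (m - n)\<bar> / real L"
proof -
  have "\<bar>max 0 (1 - \<bar>real_of_int (m - n0)\<bar> / real L) - max 0 (1 - \<bar>real_of_int (n - n0)\<bar> / real L)\<bar>
        \<le> \<bar>(1 - \<bar>real_of_int (m - n0)\<bar> / real L) - (1 - \<bar>real_of_int (n - n0)\<bar> / real L)\<bar>"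
    by (rule max_lip)
  also have "\<dots> = \<bar>\<bar>real_of_int (n - n0)\<bar> - \<bar>real_of_int (m - n0)\<bar>\<bar> / real L"
    using assms by (simp add: diff_divide_distrib[symmetric] abs_divide)
  also have "\<dots> \<le> \<bar>real_of_int (m - n)\<bar> / real L"
  proof (intro divide_right_mono)
    have "\<bar>\<bar>real_of_int (n - n0)\<bar> - \<bar>real_of_int (m - n0)\<bar>\<bar> \<le> \<bar>real_of_int (n - n0) - real_of_int (m - n0)\<bar>"
      by (rule abs_triangle_ineq3)
    also have "\<dots> = \<bar>real_of_int (m - n)\<bar>" by (simp add: abs_minus_commute)
    finally show "\<bar>\<bar>real_of_int (n - n0)\<bar> - \<bar>real_of_int (m - n0)\<bar>\<bar> \<le> \<bar>real_of_int (m - n)\<bar>" .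
  qed simp
  finally show ?thesis by (simp add: tri_def)
qed

lemma tri_step: "L > 0 \<Longrightarrow> \<bar>tri L n0 (n + 1) - tri L n0 n\<bar> \<le> 1 / real L"
  using tri_lip[of L n0 "n + 1" n] by simp

lemma tri_step': "L > 0 \<Longrightarrow> \<bar>tri L n0 (n - 1) - tri L n0 n\<bar> \<le> 1 / real L"
  using tri_lip[of L n0 "n - 1" n] by simp

lemma Aop_mult:
  fixes \<phi> :: "int \<Rightarrow> real"
  shows "Aop lam E v (\<lambda>n. of_real (\<phi> n) * x n) n = of_real (\<phi> n) * Aop lam E v x n
     + of_real (\<phi> (n + 1) - \<phi> n) * x (n + 1) + of_real (\<phi> (n - 1) - \<phi> n) * x (n - 1)"
  by (simp add: Aop_def algebra_simps)

lemma Aop_mult_bound: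
  fixes \<phi> :: "int \<Rightarrow> real"
  assumes "0 \<le> \<phi> n" "\<phi> n \<le> 1" "\<bar>\<phi> (n + 1) - \<phi> n\<bar> \<le> d" "\<bar>\<phi> (n - 1) - \<phi> n\<bar> \<le> d"
  shows "norm (Aop lam E v (\<lambda>n. of_real (\<phi> n) * x n) n) \<le> norm (Aop lam E v x n) + d * norm (x (n + 1)) + d * norm (x (n - 1))"
proof -
  have "norm (Aop lam E v (\<lambda>n. of_real (\<phi> n) * x n) n) \<le> norm (of_real (\<phi> n) * Aop lam E v x n)
     + norm (of_real (\<phi> (n + 1) - \<phi> n) * x (n + 1)) + norm (of_real (\<phi> (n - 1) - \<phi> n) * x (n - 1))"
    unfolding Aop_mult by (rule order_trans[OF norm_triangle_ineq add_right_mono[OF norm_triangle_ineq]])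
  also have "norm (of_real (\<phi> n) * Aop lam E v x n) \<le> norm (Aop lam E v x n)"
    using assms by (simp add: norm_mult mult_left_le_one_le)
  also have "norm (of_real (\<phi> (n + 1) - \<phi> n) * x (n + 1)) \<le> d * norm (x (n + 1))"
    unfolding norm_mult norm_of_real using assms by (intro mult_right_mono) auto
  also have "norm (of_real (\<phi> (n - 1) - \<phi> n) * x (n - 1)) \<le> d * norm (x (n - 1))"
    unfolding norm_mult norm_of_real using assms by (intro mult_right_mono) auto
  finally show ?thesis by simp
qed

lemma F_inf:
  assumes "\<epsilon> > 0"
  shows "\<exists>L::nat. \<forall>lam E v. bnd v \<longrightarrow> (\<exists>c y. fsupp {c..c + int L} y \<and> lp_norm \<infinity> y > 0 \<and>
      lp_norm \<infinity> (Aop lam E v y) / lp_norm \<infinity> y \<le> nu \<infinity> lam E v + \<epsilon>)"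
proof -
  obtain L :: nat where L: "real L > 8 / \<epsilon>" using reals_Archimedean2 by blast
  have Lpos: "L > 0" using L assms by (metis divide_pos_pos gr0I of_nat_0 order_less_asym zero_less_numeral)
  have L2: "2 / real L < \<epsilon> / 4" using L assms Lpos by (simp add: field_simps)
  have "\<forall>lam E v. bnd v \<longrightarrow> (\<exists>c y. fsupp {c..c + int (2 * L)} y \<and> lp_norm \<infinity> y > 0 \<and>
      lp_norm \<infinity> (Aop lam E v y) / lp_norm \<infinity> y \<le> nu \<infinity> lam E v + \<epsilon>)"
  proof (intro allI impI)
    fix lam E v assume bv: "bnd v"
    have p1: "(1::ereal) \<le> \<infinity>" by simp
    define nv where "nv = nu \<infinity> lam E v"
    have nv0: "nv \<ge> 0" unfolding nv_def by (rule nu_nonneg[OF p1 bv])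
    obtain x where x: "lp_mem \<infinity> x" "lp_norm \<infinity> x = 1" "lp_norm \<infinity> (Aop lam E v x) < nv + \<epsilon> / 4"
      using nu_approx[OF p1 bv, of "\<epsilon>/4"] assms unfolding nv_def by auto
    have bx: "bdd_above (range (\<lambda>n. norm (x n)))" using x(1) by (simp add: lp_mem_def)
    have xle: "norm (x n) \<le> 1" for n using sup_upper[OF bx, of n] x(2) by simp
    have bAx: "bdd_above (range (\<lambda>n. norm (Aop lam E v x n)))"
      using Aop_mem[OF bv x(1) p1] by (simp add: lp_mem_def)
    define a where "a = lp_norm \<infinity> (Aop lam E v x)"
    have Axle: "norm (Aop lam E v x n) \<le> a" for n using sup_upper[OF bAx, of n] by (simp add: a_def)
    have a0: "a \<ge> 0" using Axle[of 0] norm_ge_zero[of "Aop lam E v x 0"] by linarith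
    define \<delta> where "\<delta> = \<epsilon> / (2 * (nv + \<epsilon>))"
    have d0: "\<delta> > 0" "\<delta> \<le> 1/2" using assms nv0 by (auto simp: \<delta>_def field_simps)
    have "1 - \<delta> < (SUP n. norm (x n))" using x(2) d0 by (simp add: lp_norm_def)
    then obtain n0 where n0: "1 - \<delta> < norm (x n0)" using less_cSUP_iff[OF _ bx] by auto
    define y where "y = (\<lambda>n. of_real (tri L n0 n) * x n)"
    have fs: "fsupp {n0 - int L..n0 + int L} y" using tri_zero[OF Lpos] by (auto simp: fsupp_def y_def)
    have by': "bdd_above (range (\<lambda>n. norm (y n)))" by (rule fsupp_bdd[OF fs])
    have ny: "lp_norm \<infinity> y \<ge> norm (x n0)" using sup_upper[OF by', of n0] by (simp add: y_def tri_center)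
    have ypos: "lp_norm \<infinity> y > 0" using ny n0 d0 by linarith
    have "norm (Aop lam E v y n) \<le> a + 2 / real L" for n
    proof -
      have "norm (Aop lam E v y n) \<le> norm (Aop lam E v x n) + (1 / real L) * norm (x (n + 1)) + (1 / real L) * norm (x (n - 1))"
        unfolding y_def by (rule Aop_mult_bound) (simp_all add: tri_ge0 tri_le1 tri_step tri_step' Lpos)
      also have "\<dots> \<le> a + (1 / real L) * 1 + (1 / real L) * 1"
        using Axle[of n] xle[of "n+1"] xle[of "n - 1"] by (intro add_mono mult_left_mono) auto
      finally show ?thesis by simp
    qed
    then have nAy: "lp_norm \<infinity> (Aop lam E v y) \<le> a + 2 / real L" by (rule sup_least)
    have "lp_norm \<infinity> (Aop lam E v y) / lp_norm \<infinity> y \<le> (a + 2 / real L) / (1 - \<delta>)"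
    proof -
      have "lp_norm \<infinity> (Aop lam E v y) / lp_norm \<infinity> y \<le> (a + 2 / real L) / lp_norm \<infinity> y"
        using nAy ypos by (simp add: divide_right_mono)
      also have "\<dots> \<le> (a + 2 / real L) / (1 - \<delta>)"
        using ny n0 d0 ypos nAy a0 Lpos by (intro divide_left_mono) auto
      finally show ?thesis .
    qed
    also have "\<dots> \<le> (nv + \<epsilon> / 2) / (1 - \<delta>)"
      using x(3) L2 d0 by (intro divide_right_mono) (auto simp: a_def)
    also have "\<dots> \<le> nv + \<epsilon>"
    proof -
      have ne: "nv + \<epsilon> \<noteq> 0" using assms nv0 by simp
      have "\<delta> * (nv + \<epsilon>) = \<epsilon> / 2" unfolding \<delta>_def using ne by (simp add: field_simps)
      then have "nv + \<epsilon> / 2 \<le> (nv + \<epsilon>) * (1 - \<delta>)" by (simp add: algebra_simps)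
      moreover have "1 - \<delta> > 0" using d0 by simp
      ultimately show ?thesis by (simp add: pos_divide_le_eq)
    qed
    finally have "lp_norm \<infinity> (Aop lam E v y) / lp_norm \<infinity> y \<le> nu \<infinity> lam E v + \<epsilon>" by (simp add: nv_def)
    moreover have "fsupp {(n0 - int L)..(n0 - int L) + int (2 * L)} y" using fs by (simp add: add.commute)
    ultimately show "\<exists>c y. fsupp {c..c + int (2 * L)} y \<and> lp_norm \<infinity> y > 0 \<and>
      lp_norm \<infinity> (Aop lam E v y) / lp_norm \<infinity> y \<le> nu \<infinity> lam E v + \<epsilon>" using ypos by blast
  qed
  then show ?thesis by blast
qed


lemma F_fin:
  assumes pinf: "p \<noteq> \<infinity>" and p1: "1 \<le> p" and bv: "bnd v" and e0: "\<epsilon> > 0"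
  shows "\<exists>a b y. fsupp {a..b} y \<and> lp_norm p y > 0 \<and>
      lp_norm p (Aop lam E v y) / lp_norm p y \<le> nu p lam E v + \<epsilon>"
proof -
  define r where "r = real_of_ereal p"
  have r1: "r \<ge> 1" using real_p_ge1[OF p1 pinf] by (simp add: r_def)
  define nv where "nv = nu p lam E v"
  have nv0: "nv \<ge> 0" unfolding nv_def by (rule nu_nonneg[OF p1 bv])
  obtain x where x: "lp_mem p x" "lp_norm p x = 1" "lp_norm p (Aop lam E v x) < nv + \<epsilon> / 4"
    using nu_approx[OF p1 bv, of "\<epsilon>/4"] e0 unfolding nv_def by auto
  define g where "g = (\<lambda>n. norm (x n) powr r)"
  have g0: "g n \<ge> 0" for n by (simp add: g_def)
  have sg: "g summable_on UNIV" using x(1) pinf by (simp add: lp_mem_def g_def r_def)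
  have ig0: "infsum g UNIV \<ge> 0" by (rule infsum_nonneg) (simp add: g0)
  have ig: "infsum g UNIV = 1"
  proof -
    have "infsum g UNIV powr (1 / r) = 1" using x(2) pinf by (simp add: lp_norm_def g_def r_def)
    then have "(infsum g UNIV powr (1 / r)) powr r = 1" by simp
    then show ?thesis using ig0 r1 by (simp add: powr_powr)
  qed
  define \<delta> where "\<delta> = min (1/2) (min ((\<epsilon>/4) powr r / 4) (\<epsilon> / (4 * (nv + \<epsilon>))))"
  have d0: "\<delta> > 0" using e0 nv0 by (simp add: \<delta>_def)
  have d1: "\<delta> \<le> 1/2" "\<delta> \<le> (\<epsilon>/4) powr r / 4" "\<delta> \<le> \<epsilon> / (4 * (nv + \<epsilon>))"
    unfolding \<delta>_def by (rule min.cobounded1, (rule min.coboundedI2, rule min.cobounded1), (rule min.coboundedI2, rule min.cobounded2))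
  have "((\<lambda>F. sum g F) \<longlongrightarrow> 1) (finite_subsets_at_top UNIV)" using infsum_tendsto[OF sg] ig by simp
  then have "eventually (\<lambda>F. dist (sum g F) 1 < \<delta>) (finite_subsets_at_top UNIV)" using d0 by (rule tendstoD)
  then have "\<exists>X. finite X \<and> X \<subseteq> UNIV \<and> (\<forall>Y. finite Y \<and> X \<subseteq> Y \<and> Y \<subseteq> UNIV \<longrightarrow> dist (sum g Y) 1 < \<delta>)"
    by (simp only: eventually_finite_subsets_at_top)
  then obtain F0 where F0a: "finite F0" and F0b: "\<forall>Y. finite Y \<and> F0 \<subseteq> Y \<and> Y \<subseteq> UNIV \<longrightarrow> dist (sum g Y) 1 < \<delta>"
    by (elim exE conjE)
  have F0: "finite F0" "\<And>Y. finite Y \<Longrightarrow> F0 \<subseteq> Y \<Longrightarrow> dist (sum g Y) 1 < \<delta>" using F0a F0b by auto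
  have sF0: "sum g F0 > 1 - \<delta>" using F0(2)[OF F0(1) order_refl] by (simp add: dist_real_def abs_less_iff)
  have tail: "g n < \<delta>" if "n \<notin> F0" for n
  proof -
    have "sum g (insert n F0) \<le> infsum g UNIV" by (rule finite_sum_le_infsum[OF sg]) (auto simp: F0 g0)
    then have "g n + sum g F0 \<le> 1" using that F0(1) ig by simp
    then show ?thesis using sF0 by linarith
  qed
  define N where "N = Max (insert 0 (abs ` F0)) + 1"
  have N1: "N \<ge> 1" using F0(1) by (simp add: N_def)
  have Nbig: "\<bar>m\<bar> < N" if "m \<in> F0" for m
  proof -
    have "\<bar>m\<bar> \<le> Max (insert 0 (abs ` F0))" using that F0(1) by (intro Max_ge) auto
    then show ?thesis by (simp add: N_def)
  qed
  have notF0: "n \<notin> F0" if "\<bar>n\<bar> \<ge> N" for n using Nbig that by force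
  define I where "I = {-N..N}"
  define y where "y = (\<lambda>n. if n \<in> I then x n else 0)"
  have fsy: "fsupp {-N..N} y" by (simp add: fsupp_def y_def I_def)
  have ny: "lp_norm p y = (\<Sum>n\<in>I. g n) powr (1 / r)"
    using lp_fin(2)[OF pinf p1 fsy] by (simp add: g_def y_def I_def r_def)
  have F0I: "F0 \<subseteq> I" using Nbig by (force simp: I_def)
  have sI: "sum g I > 1 - \<delta>" using F0(2)[of I] F0I by (simp add: I_def dist_real_def abs_less_iff)
  have ny_ge: "lp_norm p y \<ge> 1 - \<delta>"
  proof -
    have "(1 - \<delta>) powr 1 \<le> (1 - \<delta>) powr (1 / r)" using r1 d0 d1 by (intro powr_mono') auto
    also have "\<dots> \<le> (\<Sum>n\<in>I. g n) powr (1 / r)" using sI d1 r1 by (intro powr_mono2) auto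
    finally show ?thesis using ny d1 by simp
  qed
  have ypos: "lp_norm p y > 0" using ny_ge d1 by linarith
  define W where "W = {-N-1..N+1}"
  have fsA: "fsupp W (Aop lam E v y)" using Aop_fsupp[OF fsy] by (simp add: W_def)
  have nAy: "lp_norm p (Aop lam E v y) = (\<Sum>n\<in>W. norm (Aop lam E v y n) powr r) powr (1 / r)"
    using lp_fin(2)[OF pinf p1 fsA] by (simp add: r_def)
  define T where "T = (\<lambda>n. if n \<in> I then Aop lam E v x n else 0)"
  define e where "e = (\<lambda>n. Aop lam E v y n - T n)"
  have finW: "finite W" by (simp add: W_def)
  have "lp_norm p (Aop lam E v y) \<le> (\<Sum>n\<in>W. norm (T n) powr r) powr (1 / r) + (\<Sum>n\<in>W. norm (e n) powr r) powr (1 / r)"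
    unfolding nAy using minkowski_c[OF finW r1, of T e] by (simp add: e_def)
  also have "(\<Sum>n\<in>W. norm (T n) powr r) powr (1 / r) \<le> lp_norm p (Aop lam E v x)"
  proof -
    define h where "h = (\<lambda>n. norm (Aop lam E v x n) powr r)"
    have sh: "h summable_on UNIV" using Aop_mem[OF bv x(1) p1] pinf by (simp add: lp_mem_def h_def r_def)
    have "(\<Sum>n\<in>W. norm (T n) powr r) = (\<Sum>n\<in>W. if n \<in> I then h n else 0)"
      by (intro sum.cong) (auto simp: T_def h_def)
    also have "\<dots> = sum h (W \<inter> I)" using finW by (simp add: sum.inter_restrict)
    also have "W \<inter> I = I" by (auto simp: W_def I_def)
    also have "sum h I \<le> infsum h UNIV" by (rule finite_sum_le_infsum[OF sh]) (auto simp: I_def h_def)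
    finally have "(\<Sum>n\<in>W. norm (T n) powr r) powr (1 / r) \<le> infsum h UNIV powr (1 / r)"
      using r1 by (intro powr_mono2) (auto intro: sum_nonneg)
    then show ?thesis using pinf by (simp add: lp_norm_def h_def r_def)
  qed
  also have "(\<Sum>n\<in>W. norm (e n) powr r) powr (1 / r) \<le> \<epsilon> / 4"
  proof -
    have yI: "y n = x n" if "n \<in> I" for n using that by (simp add: y_def)
    have yO: "y n = 0" if "n \<notin> I" for n using that by (simp add: y_def)
    have e_in: "e n = 0" if "n \<in> {-N+1..N-1}" for n
    proof -
      have "n \<in> I" "n + 1 \<in> I" "n - 1 \<in> I" using that by (auto simp: I_def)
      then show ?thesis by (simp add: e_def T_def Aop_def yI)
    qed
    have NI: "N \<in> I" "-N \<in> I" "N - 1 \<in> I" "-N + 1 \<in> I" "N + 1 \<notin> I" "-N - 1 \<notin> I" "N + 2 \<notin> I" "-N - 2 \<notin> I"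
      using N1 by (auto simp: I_def)
    have eB: "e N = - x (N + 1)" "e (-N) = - x (-N - 1)" "e (N + 1) = x N" "e (-N - 1) = x (-N)"
      using NI by (simp_all add: e_def T_def Aop_def yI yO algebra_simps)
    define B4 where "B4 = {-N-1, -N, N, N+1}"
    have eBd: "norm (e n) powr r \<le> \<delta>" if "n \<in> B4" for n
    proof -
      have "n = -N-1 \<or> n = -N \<or> n = N \<or> n = N+1" using that by (simp add: B4_def)
      then have "\<exists>m. \<bar>m\<bar> \<ge> N \<and> norm (e n) = norm (x m)"
      proof (elim disjE)
        assume "n = -N-1" then show ?thesis using eB N1 by (intro exI[of _ "-N"]) simp
      next
        assume "n = -N" then show ?thesis using eB N1 by (intro exI[of _ "-N-1"]) simp
      next
        assume "n = N" then show ?thesis using eB N1 by (intro exI[of _ "N+1"]) simp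
      next
        assume "n = N+1" then show ?thesis using eB N1 by (intro exI[of _ "N"]) simp
      qed
      then obtain m where m: "\<bar>m\<bar> \<ge> N" "norm (e n) = norm (x m)" by blast
      have "g m < \<delta>" by (rule tail[OF notF0[OF m(1)]])
      then show ?thesis using m(2) by (simp add: g_def)
    qed
    have "(\<Sum>n\<in>W. norm (e n) powr r) = (\<Sum>n\<in>B4. norm (e n) powr r)"
    proof (rule sum.mono_neutral_right[OF finW])
      show "B4 \<subseteq> W" using N1 by (auto simp: B4_def W_def)
      show "\<forall>i\<in>W - B4. norm (e i) powr r = 0"
      proof
        fix i assume "i \<in> W - B4"
        then have "i \<in> {-N+1..N-1}" by (auto simp: W_def B4_def)
        then show "norm (e i) powr r = 0" using e_in by simp
      qed
    qed
    also have "\<dots> \<le> of_nat (card B4) * \<delta>" by (rule sum_bounded_above) (rule eBd)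
    also have "\<dots> \<le> 4 * \<delta>"
    proof -
      have "B4 = set [-N-1, -N, N, N+1]" by (simp add: B4_def)
      then have "card B4 \<le> 4" using card_length[of "[-N-1, -N, N, N+1]"] by simp
      then show ?thesis using d0 by (intro mult_right_mono) auto
    qed
    finally have s4: "(\<Sum>n\<in>W. norm (e n) powr r) \<le> 4 * \<delta>" .
    have "(\<Sum>n\<in>W. norm (e n) powr r) powr (1 / r) \<le> (4 * \<delta>) powr (1 / r)"
      using s4 r1 by (intro powr_mono2) (auto intro: sum_nonneg)
    also have "\<dots> \<le> ((\<epsilon>/4) powr r) powr (1 / r)" using d1 d0 r1 by (intro powr_mono2) auto
    also have "\<dots> = \<epsilon> / 4" using e0 r1 by (simp add: powr_powr)
    finally show ?thesis .
  qed
  finally have nAy_le: "lp_norm p (Aop lam E v y) \<le> lp_norm p (Aop lam E v x) + \<epsilon> / 4" by simp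
  have Ay0: "lp_norm p (Aop lam E v y) \<ge> 0" by (rule lp_nonneg[OF Aop_mem[OF bv lp_fin(1)[OF pinf p1 fsy] p1]])
  have "lp_norm p (Aop lam E v y) / lp_norm p y \<le> (nv + \<epsilon> / 2) / (1 - \<delta>)"
  proof -
    have "lp_norm p (Aop lam E v y) / lp_norm p y \<le> (nv + \<epsilon> / 2) / lp_norm p y"
      using nAy_le x(3) ypos by (intro divide_right_mono) auto
    also have "\<dots> \<le> (nv + \<epsilon> / 2) / (1 - \<delta>)"
      using ny_ge d1 d0 nv0 e0 by (intro divide_left_mono) auto
    finally show ?thesis .
  qed
  also have "\<dots> \<le> nv + \<epsilon>"
  proof -
    have ne: "nv + \<epsilon> > 0" using e0 nv0 by simp
    have "\<delta> * (nv + \<epsilon>) \<le> \<epsilon> / (4 * (nv + \<epsilon>)) * (nv + \<epsilon>)" using d1 ne by (intro mult_right_mono) auto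
    also have "\<dots> = \<epsilon> / 4" using ne by (simp add: field_simps)
    finally have "\<delta> * (nv + \<epsilon>) \<le> \<epsilon> / 4" .
    then have "nv + \<epsilon> / 2 \<le> (nv + \<epsilon>) * (1 - \<delta>)" using e0 by (simp add: algebra_simps)
    moreover have "1 - \<delta> > 0" using d1 by simp
    ultimately show ?thesis by (simp add: pos_divide_le_eq)
  qed
  finally show ?thesis using fsy ypos unfolding nv_def by blast
qed


lemma tri_supp:
  assumes L: "L > 0" and ne: "tri L (j * int L) n \<noteq> 0"
  shows "j = n div int L \<or> j = n div int L + 1"
proof -
  define q where "q = n div int L"
  define s where "s = n mod int L"
  have ns: "n = q * int L + s" by (simp add: q_def s_def)
  have s0: "0 \<le> s" "s < int L" using L by (simp_all add: s_def)
  have "\<bar>real_of_int (n - j * int L)\<bar> / real L < 1"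
  proof (rule ccontr)
    assume "\<not> \<bar>real_of_int (n - j * int L)\<bar> / real L < 1"
    then have "tri L (j * int L) n = 0" by (simp add: tri_def max_def)
    then show False using ne by simp
  qed
  then have "\<bar>real_of_int (n - j * int L)\<bar> < real L" using L by (simp add: divide_simps)
  then have lt: "\<bar>n - j * int L\<bar> < int L" by linarith
  have "\<not> j \<le> q - 1"
  proof
    assume "j \<le> q - 1"
    then have "j * int L \<le> (q - 1) * int L" by (intro mult_right_mono) auto
    then show False using lt ns s0 by (simp add: algebra_simps abs_if split: if_splits)
  qed
  moreover have "\<not> j \<ge> q + 2"
  proof
    assume "j \<ge> q + 2"
    then have "j * int L \<ge> (q + 2) * int L" by (intro mult_right_mono) auto
    then show False using lt ns s0 by (simp add: algebra_simps abs_if split: if_splits)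
  qed
  ultimately show ?thesis by (simp add: q_def[symmetric]) linarith
qed

lemma tri_pu:
  assumes L: "L > 0" and J: "finite J" "n div int L \<in> J" "n div int L + 1 \<in> J"
  shows "(\<Sum>j\<in>J. tri L (j * int L) n) = 1"
proof -
  define q where "q = n div int L"
  define s where "s = n mod int L"
  have ns: "n = q * int L + s" by (simp add: q_def s_def)
  have s0: "0 \<le> s" "s < int L" using L by (simp_all add: s_def)
  have "(\<Sum>j\<in>J. tri L (j * int L) n) = (\<Sum>j\<in>{q, q+1}. tri L (j * int L) n)"
  proof (rule sum.mono_neutral_right[OF J(1)])
    show "{q, q + 1} \<subseteq> J" using J by (simp add: q_def)
    show "\<forall>i\<in>J - {q, q + 1}. tri L (i * int L) n = 0" using tri_supp[OF L] by (auto simp: q_def)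
  qed
  also have "\<dots> = tri L (q * int L) n + tri L ((q + 1) * int L) n" by simp
  also have "tri L (q * int L) n = 1 - real_of_int s / real L"
    using s0 L by (simp add: tri_def ns divide_simps)
  also have "tri L ((q + 1) * int L) n = real_of_int s / real L"
  proof -
    have "n - (q + 1) * int L = s - int L" by (simp add: ns algebra_simps)
    then have "\<bar>real_of_int (n - (q + 1) * int L)\<bar> = real L - real_of_int s" using s0 by simp
    then show ?thesis using s0 L by (simp add: tri_def divide_simps)
  qed
  finally show ?thesis by simp
qed

lemma root_diff_pow:
  fixes a b r :: real
  assumes "a \<ge> 0" "b \<ge> 0" "r \<ge> 1"
  shows "\<bar>a powr (1/r) - b powr (1/r)\<bar> powr r \<le> \<bar>a - b\<bar>"
proof -
  have main: "(x powr (1/r) - y powr (1/r)) powr r \<le> x - y" if xy: "0 \<le> y" "y \<le> x" for x y :: real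
  proof -
    define u where "u = x powr (1/r) - y powr (1/r)"
    define w where "w = y powr (1/r)"
    have u0: "u \<ge> 0" using xy assms by (simp add: u_def powr_mono2)
    have w0: "w \<ge> 0" by (simp add: w_def)
    have uw: "u + w = x powr (1/r)" by (simp add: u_def w_def)
    have uwr: "(u + w) powr r = x" using xy assms by (simp add: uw powr_powr)
    have wr: "w powr r = y" using xy assms by (simp add: w_def powr_powr)
    have "u powr r = u * u powr (r - 1)" using u0 by (simp add: powr_mult_base)
    also have "\<dots> \<le> u * (u + w) powr (r - 1)" using u0 w0 assms by (intro mult_left_mono powr_mono2) auto
    finally have a1: "u powr r \<le> u * (u + w) powr (r - 1)" .
    have "w powr r = w * w powr (r - 1)" using w0 by (simp add: powr_mult_base)
    also have "\<dots> \<le> w * (u + w) powr (r - 1)" using u0 w0 assms by (intro mult_left_mono powr_mono2) auto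
    finally have a2: "w powr r \<le> w * (u + w) powr (r - 1)" .
    have "u * (u + w) powr (r - 1) + w * (u + w) powr (r - 1) = (u + w) * (u + w) powr (r - 1)" by (simp add: algebra_simps)
    also have "\<dots> = (u + w) powr r" using u0 w0 by (simp add: powr_mult_base)
    finally have "u powr r + w powr r \<le> (u + w) powr r" using a1 a2 by linarith
    then show ?thesis using uwr wr by (simp add: u_def)
  qed
  show ?thesis
  proof (cases "b \<le> a")
    case True
    have "a powr (1/r) \<ge> b powr (1/r)" using True assms by (intro powr_mono2) auto
    then show ?thesis using main[of b a] True assms by simp
  next
    case False
    have "a powr (1/r) \<le> b powr (1/r)" using False assms by (intro powr_mono2) auto
    then show ?thesis using main[of a b] False assms by (simp add: abs_minus_commute)
  qed
qed

lemma two_pow: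
  fixes u w r :: real
  assumes "u \<ge> 0" "w \<ge> 0" "r \<ge> 1"
  shows "(u + w) powr r \<le> 2 powr r * (u powr r + w powr r)"
proof -
  define M where "M = max u w"
  have "u + w \<le> 2 * M" by (simp add: M_def)
  then have "(u + w) powr r \<le> (2 * M) powr r" using assms by (intro powr_mono2) auto
  also have "\<dots> = 2 powr r * M powr r" using assms by (simp add: powr_mult M_def)
  also have "M powr r \<le> u powr r + w powr r" by (simp add: M_def max_def)
  then have "2 powr r * M powr r \<le> 2 powr r * (u powr r + w powr r)" by (intro mult_left_mono) auto
  finally show ?thesis .
qed

lemma tri_dsum:
  assumes L: "L > 0" and J: "finite J" and m: "\<bar>m - n\<bar> = 1"
  shows "(\<Sum>j\<in>J. \<bar>tri L (j * int L) m - tri L (j * int L) n\<bar>) \<le> 4 / real L"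
proof -
  define K where "K = {n div int L, n div int L + 1, m div int L, m div int L + 1}"
  have Kc: "card K \<le> 4"
  proof -
    have "K = set [n div int L, n div int L + 1, m div int L, m div int L + 1]" by (simp add: K_def)
    then show ?thesis using card_length[of "[n div int L, n div int L + 1, m div int L, m div int L + 1]"] by simp
  qed
  have "(\<Sum>j\<in>J. \<bar>tri L (j * int L) m - tri L (j * int L) n\<bar>) = (\<Sum>j\<in>J \<inter> K. \<bar>tri L (j * int L) m - tri L (j * int L) n\<bar>)"
  proof (rule sum.mono_neutral_right[OF J])
    show "J \<inter> K \<subseteq> J" by auto
    show "\<forall>i\<in>J - J \<inter> K. \<bar>tri L (i * int L) m - tri L (i * int L) n\<bar> = 0"
    proof
      fix i assume "i \<in> J - J \<inter> K"
      then have "i \<notin> K" by auto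
      then have "tri L (i * int L) m = 0" "tri L (i * int L) n = 0"
        using tri_supp[OF L, of i m] tri_supp[OF L, of i n] by (auto simp: K_def)
      then show "\<bar>tri L (i * int L) m - tri L (i * int L) n\<bar> = 0" by simp
    qed
  qed
  also have "\<dots> \<le> of_nat (card (J \<inter> K)) * (1 / real L)"
  proof (rule sum_bounded_above)
    fix j
    show "\<bar>tri L (j * int L) m - tri L (j * int L) n\<bar> \<le> 1 / real L"
    proof -
      have "real_of_int \<bar>m - n\<bar> = 1" using m by simp
      then have h: "\<bar>real_of_int m - real_of_int n\<bar> = 1" by simp
      show ?thesis using tri_lip[OF L, of "j * int L" m n] h by simp
    qed
  qed
  also have "\<dots> \<le> 4 * (1 / real L)"
  proof -
    have "card (J \<inter> K) \<le> card K" by (rule card_mono) (auto simp: K_def)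
    then show ?thesis using Kc by (intro mult_right_mono) auto
  qed
  finally show ?thesis by simp
qed


lemma Loc_core:
  assumes pinf: "p \<noteq> \<infinity>" and p1: "1 \<le> p" and L: "L > 0"
    and bv: "bnd v" and fsy: "fsupp {a..b} y" and ypos: "lp_norm p y > 0"
  shows "\<exists>j z. fsupp {j * int L - int L..j * int L + int L} z \<and> lp_norm p z > 0 \<and>
        lp_norm p (Aop lam E v z) / lp_norm p z \<le> lp_norm p (Aop lam E v y) / lp_norm p y
           + (2 powr (real_of_ereal p + 3) / real L) powr (1 / real_of_ereal p)"
proof -
  define r where "r = real_of_ereal p"
  have r1: "r \<ge> 1" using real_p_ge1[OF p1 pinf] by (simp add: r_def)
  define \<phi> where "\<phi> = (\<lambda>j n. tri L (j * int L) n)"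
  define \<psi> where "\<psi> = (\<lambda>j n. \<phi> j n powr (1 / r))"
  define J where "J = {(a - 1) div int L .. (b + 1) div int L + 1}"
  define N where "N = {a - 1..b + 1}"
  define S where "S = {a..b}"
  have finJ: "finite J" and finN: "finite N" and finS: "finite S" by (simp_all add: J_def N_def S_def)
  have \<phi>0: "\<phi> j n \<ge> 0" for j n by (simp add: \<phi>_def tri_ge0)
  have \<psi>r: "\<psi> j n powr r = \<phi> j n" for j n using r1 \<phi>0[of j n] by (simp add: \<psi>_def powr_powr)
  have \<psi>0: "\<psi> j n \<ge> 0" for j n by (simp add: \<psi>_def)
  have \<psi>abs: "\<bar>\<psi> j n\<bar> = \<psi> j n" for j n using \<psi>0[of j n] by simp
  have PU: "(\<Sum>j\<in>J. \<phi> j n) = 1" if "n \<in> N" for n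
  proof -
    have "(a - 1) div int L \<le> n div int L" "n div int L \<le> (b + 1) div int L"
      using that L by (auto simp: N_def intro: zdiv_mono1)
    then show ?thesis unfolding \<phi>_def by (intro tri_pu[OF L finJ]) (auto simp: J_def)
  qed
  define Y where "Y = (\<Sum>n\<in>S. norm (y n) powr r)"
  have Y0: "Y \<ge> 0" by (simp add: Y_def sum_nonneg)
  have ny: "lp_norm p y = Y powr (1 / r)" using lp_fin(2)[OF pinf p1 fsy] by (simp add: Y_def S_def r_def)
  have Ypos: "Y > 0" using ypos ny Y0 by (cases "Y = 0") auto
  have fsA: "fsupp N (Aop lam E v y)" using Aop_fsupp[OF fsy] by (simp add: N_def)
  define X where "X = lp_norm p (Aop lam E v y)"
  have X: "X = (\<Sum>n\<in>N. norm (Aop lam E v y n) powr r) powr (1 / r)"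
    using lp_fin(2)[OF pinf p1 fsA] by (simp add: X_def r_def)
  have X0: "X \<ge> 0" by (simp add: X)
  define z where "z = (\<lambda>j n. of_real (\<psi> j n) * y n)"
  have fsz: "fsupp S (z j)" for j using fsy by (simp add: fsupp_def z_def S_def)
  have fsz2: "fsupp {j * int L - int L..j * int L + int L} (z j)" for j
    using tri_zero[OF L, of _ "j * int L"] r1 by (auto simp: fsupp_def z_def \<psi>_def \<phi>_def)
  have fsAz: "fsupp N (Aop lam E v (z j))" for j using Aop_fsupp[of a b "z j"] fsz[of j] by (simp add: N_def S_def)
  define Z where "Z = (\<lambda>j. \<Sum>n\<in>S. \<phi> j n * norm (y n) powr r)"
  have Z0: "Z j \<ge> 0" for j by (simp add: Z_def sum_nonneg \<phi>0)
  have nz: "lp_norm p (z j) = Z j powr (1 / r)" for j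
  proof -
    have "norm (z j n) powr r = \<phi> j n * norm (y n) powr r" for n
      by (simp add: z_def norm_mult powr_mult \<psi>abs \<psi>r)
    then show ?thesis using lp_fin(2)[OF pinf p1 fsz[of j]] by (simp add: Z_def r_def)
  qed
  define A where "A = (\<lambda>j. \<Sum>n\<in>N. norm (Aop lam E v (z j) n) powr r)"
  have nAz: "lp_norm p (Aop lam E v (z j)) = A j powr (1 / r)" for j
    using lp_fin(2)[OF pinf p1 fsAz[of j]] by (simp add: A_def r_def)
  have sumZ: "(\<Sum>j\<in>J. Z j) = Y"
  proof -
    have "(\<Sum>j\<in>J. Z j) = (\<Sum>n\<in>S. (\<Sum>j\<in>J. \<phi> j n) * norm (y n) powr r)"
      unfolding Z_def by (simp add: sum.swap[of _ J] sum_distrib_right)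
    also have "\<dots> = (\<Sum>n\<in>S. norm (y n) powr r)" using PU by (intro sum.cong) (auto simp: S_def N_def)
    finally show ?thesis by (simp add: Y_def)
  qed
  define F where "F = (\<lambda>jn. of_real (\<psi> (fst jn) (snd jn)) * Aop lam E v y (snd jn))"
  define G where "G = (\<lambda>jn. of_real (\<psi> (fst jn) (snd jn + 1) - \<psi> (fst jn) (snd jn)) * y (snd jn + 1)
       + of_real (\<psi> (fst jn) (snd jn - 1) - \<psi> (fst jn) (snd jn)) * y (snd jn - 1))"
  have AFG: "Aop lam E v (z j) n = F (j, n) + G (j, n)" for j n
    unfolding z_def F_def G_def by (simp add: Aop_mult add.assoc)
  have sumA: "(\<Sum>j\<in>J. A j) = (\<Sum>jn\<in>J \<times> N. norm (F jn + G jn) powr r)"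
    unfolding A_def AFG by (simp add: sum.cartesian_product split_def)
  have sumF: "(\<Sum>jn\<in>J \<times> N. norm (F jn) powr r) = (\<Sum>n\<in>N. norm (Aop lam E v y n) powr r)"
  proof -
    have "(\<Sum>jn\<in>J \<times> N. norm (F jn) powr r) = (\<Sum>j\<in>J. \<Sum>n\<in>N. \<phi> j n * norm (Aop lam E v y n) powr r)"
      by (simp add: sum.cartesian_product split_def F_def norm_mult powr_mult \<psi>abs \<psi>r)
    also have "\<dots> = (\<Sum>n\<in>N. (\<Sum>j\<in>J. \<phi> j n) * norm (Aop lam E v y n) powr r)"
      by (simp add: sum.swap[of _ J] sum_distrib_right)
    also have "\<dots> = (\<Sum>n\<in>N. norm (Aop lam E v y n) powr r)" using PU by (intro sum.cong) auto
    finally show ?thesis .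
  qed
  have ysh: "(\<Sum>n\<in>N. norm (y (n + d)) powr r) = Y" if d: "d = 1 \<or> d = -1" for d
  proof -
    have "(\<Sum>n\<in>N. norm (y (n + d)) powr r) = (\<Sum>m\<in>(\<lambda>n. n + d) ` N. norm (y m) powr r)"
      by (simp add: sum.reindex inj_on_def)
    also have "(\<lambda>n. n + d) ` N = {a - 1 + d..b + 1 + d}" by (simp add: N_def)
    also have "(\<Sum>m\<in>{a - 1 + d..b + 1 + d}. norm (y m) powr r) = Y"
      unfolding Y_def
    proof (rule sum.mono_neutral_right)
      show "finite {a - 1 + d..b + 1 + d}" by simp
      show "S \<subseteq> {a - 1 + d..b + 1 + d}" using d by (auto simp: S_def)
      show "\<forall>i\<in>{a - 1 + d..b + 1 + d} - S. norm (y i) powr r = 0" using fsy by (auto simp: fsupp_def S_def)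
    qed
    finally show ?thesis .
  qed
  define K where "K = 2 powr (r + 3) / real L"
  have sumG: "(\<Sum>jn\<in>J \<times> N. norm (G jn) powr r) \<le> K * Y"
  proof -
    define D where "D = (\<lambda>j n m. \<bar>\<phi> j m - \<phi> j n\<bar>)"
    have Gpt: "norm (G (j, n)) powr r \<le> 2 powr r * (D j n (n + 1) * norm (y (n + 1)) powr r + D j n (n - 1) * norm (y (n - 1)) powr r)" for j n
    proof -
      have "norm (G (j, n)) \<le> \<bar>\<psi> j (n + 1) - \<psi> j n\<bar> * norm (y (n + 1)) + \<bar>\<psi> j (n - 1) - \<psi> j n\<bar> * norm (y (n - 1))"
        unfolding G_def by (rule order_trans[OF norm_triangle_ineq]) (simp add: norm_mult del: of_real_diff)
      then have "norm (G (j, n)) powr r \<le> (\<bar>\<psi> j (n + 1) - \<psi> j n\<bar> * norm (y (n + 1)) + \<bar>\<psi> j (n - 1) - \<psi> j n\<bar> * norm (y (n - 1))) powr r"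
        using r1 by (intro powr_mono2) auto
      also have "\<dots> \<le> 2 powr r * ((\<bar>\<psi> j (n + 1) - \<psi> j n\<bar> * norm (y (n + 1))) powr r + (\<bar>\<psi> j (n - 1) - \<psi> j n\<bar> * norm (y (n - 1))) powr r)"
        using r1 by (intro two_pow) auto
      also have "(\<bar>\<psi> j (n + 1) - \<psi> j n\<bar> * norm (y (n + 1))) powr r \<le> D j n (n + 1) * norm (y (n + 1)) powr r"
      proof -
        have "\<bar>\<psi> j (n + 1) - \<psi> j n\<bar> powr r \<le> D j n (n + 1)"
          unfolding \<psi>_def D_def using \<phi>0 r1 by (intro root_diff_pow) auto
        then show ?thesis by (simp add: powr_mult mult_right_mono)
      qed
      also have "(\<bar>\<psi> j (n - 1) - \<psi> j n\<bar> * norm (y (n - 1))) powr r \<le> D j n (n - 1) * norm (y (n - 1)) powr r"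
      proof -
        have "\<bar>\<psi> j (n - 1) - \<psi> j n\<bar> powr r \<le> D j n (n - 1)"
          unfolding \<psi>_def D_def using \<phi>0 r1 by (intro root_diff_pow) auto
        then show ?thesis by (simp add: powr_mult mult_right_mono)
      qed
      finally show ?thesis by (simp add: mult_left_mono)
    qed
    have Dsum: "(\<Sum>j\<in>J. D j n m) \<le> 4 / real L" if "\<bar>m - n\<bar> = 1" for n m
      unfolding D_def \<phi>_def by (rule tri_dsum[OF L finJ that])
    have "(\<Sum>jn\<in>J \<times> N. norm (G jn) powr r) = (\<Sum>j\<in>J. \<Sum>n\<in>N. norm (G (j, n)) powr r)"
      by (simp add: sum.cartesian_product split_def)
    also have "\<dots> = (\<Sum>n\<in>N. \<Sum>j\<in>J. norm (G (j, n)) powr r)" by (rule sum.swap)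
    also have "\<dots> \<le> (\<Sum>n\<in>N. \<Sum>j\<in>J. 2 powr r * (D j n (n + 1) * norm (y (n + 1)) powr r + D j n (n - 1) * norm (y (n - 1)) powr r))"
      by (intro sum_mono Gpt)
    also have "\<dots> = (\<Sum>n\<in>N. 2 powr r * ((\<Sum>j\<in>J. D j n (n + 1)) * norm (y (n + 1)) powr r + (\<Sum>j\<in>J. D j n (n - 1)) * norm (y (n - 1)) powr r))"
      by (intro sum.cong refl) (simp add: distrib_left sum_distrib_left sum_distrib_right sum.distrib)
    also have "\<dots> \<le> (\<Sum>n\<in>N. 2 powr r * ((4 / real L) * norm (y (n + 1)) powr r + (4 / real L) * norm (y (n - 1)) powr r))"
      using Dsum by (intro sum_mono mult_left_mono add_mono mult_right_mono) auto
    also have "\<dots> = 2 powr r * (4 / real L) * ((\<Sum>n\<in>N. norm (y (n + 1)) powr r) + (\<Sum>n\<in>N. norm (y (n + -1)) powr r))"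
      by (simp add: sum_distrib_left sum.distrib algebra_simps sum_divide_distrib)
    also have "\<dots> = 2 powr r * (4 / real L) * (Y + Y)" using ysh[of 1] ysh[of "-1"] by simp
    also have "\<dots> = K * Y"
    proof -
      have "2 powr (r + 3) = 2 powr r * 8" by (simp add: powr_add)
      then show ?thesis by (simp add: K_def)
    qed
    finally show ?thesis .
  qed
  define c where "c = X / Y powr (1 / r) + K powr (1 / r)"
  have c0: "c \<ge> 0" using X0 by (simp add: c_def)
  have Gn: "(\<Sum>jn\<in>J \<times> N. norm (G jn) powr r) powr (1 / r) \<le> K powr (1 / r) * Y powr (1 / r)"
  proof -
    have "(\<Sum>jn\<in>J \<times> N. norm (G jn) powr r) powr (1 / r) \<le> (K * Y) powr (1 / r)"
      using sumG r1 by (intro powr_mono2) (auto intro: sum_nonneg)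
    also have "\<dots> = K powr (1 / r) * Y powr (1 / r)" by (rule powr_mult)
    finally show ?thesis .
  qed
  have sumA_le: "(\<Sum>j\<in>J. A j) \<le> c powr r * Y"
  proof -
    have "(\<Sum>j\<in>J. A j) powr (1 / r) \<le> (\<Sum>jn\<in>J \<times> N. norm (F jn) powr r) powr (1 / r) + (\<Sum>jn\<in>J \<times> N. norm (G jn) powr r) powr (1 / r)"
      unfolding sumA by (rule minkowski_c) (use finJ finN r1 in auto)
    also have "\<dots> \<le> X + K powr (1 / r) * Y powr (1 / r)" using Gn by (simp add: sumF X)
    also have "\<dots> = c * Y powr (1 / r)" using Ypos by (simp add: c_def algebra_simps)
    finally have le: "(\<Sum>j\<in>J. A j) powr (1 / r) \<le> c * Y powr (1 / r)" .
    have A0: "(\<Sum>j\<in>J. A j) \<ge> 0" by (simp add: A_def sum_nonneg)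
    have "(\<Sum>j\<in>J. A j) = ((\<Sum>j\<in>J. A j) powr (1 / r)) powr r" using A0 r1 by (simp add: powr_powr)
    also have "\<dots> \<le> (c * Y powr (1 / r)) powr r" using le r1 by (intro powr_mono2) auto
    also have "\<dots> = c powr r * Y" using c0 Y0 r1 by (simp add: powr_mult powr_powr)
    finally show ?thesis .
  qed
  have "\<exists>j\<in>J. Z j > 0 \<and> A j \<le> c powr r * Z j"
  proof (rule ccontr)
    assume "\<not> ?thesis"
    then have H: "\<And>j. j \<in> J \<Longrightarrow> Z j > 0 \<Longrightarrow> A j > c powr r * Z j" by force
    have "\<exists>j\<in>J. Z j > 0"
    proof (rule ccontr)
      assume "\<not> ?thesis"
      then have "\<forall>j\<in>J. Z j = 0" using Z0 by (auto simp: order_le_less)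
      then have "(\<Sum>j\<in>J. Z j) = 0" by simp
      then show False using sumZ Ypos by simp
    qed
    then obtain j0 where j0: "j0 \<in> J" "Z j0 > 0" by blast
    have "(\<Sum>j\<in>J. c powr r * Z j) < (\<Sum>j\<in>J. A j)"
    proof (rule sum_strict_mono_ex1[OF finJ])
      show "\<forall>j\<in>J. c powr r * Z j \<le> A j"
      proof
        fix j assume j: "j \<in> J"
        show "c powr r * Z j \<le> A j"
        proof (cases "Z j > 0")
          case True then show ?thesis using H[OF j] by fastforce
        next
          case False then have "Z j = 0" using Z0[of j] by simp
          then show ?thesis by (simp add: A_def sum_nonneg)
        qed
      qed
      show "\<exists>j\<in>J. c powr r * Z j < A j" using j0 H by blast
    qed
    then have "c powr r * Y < (\<Sum>j\<in>J. A j)" by (simp add: sum_distrib_left[symmetric] sumZ)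
    then show False using sumA_le by simp
  qed
  then obtain j where j: "j \<in> J" "Z j > 0" "A j \<le> c powr r * Z j" by blast
  have nzpos: "lp_norm p (z j) > 0" using j(2) by (simp add: nz)
  have "lp_norm p (Aop lam E v (z j)) \<le> c * lp_norm p (z j)"
  proof -
    have "A j powr (1 / r) \<le> (c powr r * Z j) powr (1 / r)" using j(3) r1 by (intro powr_mono2) (auto simp: A_def sum_nonneg)
    also have "\<dots> = c * Z j powr (1 / r)" using c0 Z0[of j] r1 by (simp add: powr_mult powr_powr)
    finally show ?thesis by (simp add: nAz nz)
  qed
  then have "lp_norm p (Aop lam E v (z j)) / lp_norm p (z j) \<le> c" using nzpos by (simp add: pos_divide_le_eq)
  also have "c = lp_norm p (Aop lam E v y) / lp_norm p y + (2 powr (real_of_ereal p + 3) / real L) powr (1 / real_of_ereal p)"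
    by (simp add: c_def X_def ny K_def r_def)
  finally show ?thesis using fsz2[of j] nzpos by blast
qed


lemma pot_floor:
  assumes "0 \<le> \<beta>" "\<beta> \<le> 1"
  shows "sturm_pot \<beta> \<theta> n = of_int (\<lfloor>of_int (n + 1) * \<beta> + \<theta>\<rfloor> - \<lfloor>of_int n * \<beta> + \<theta>\<rfloor>)"
proof -
  define t where "t = of_int n * \<beta> + \<theta>"
  have e: "of_int (n + 1) * \<beta> + \<theta> = t + \<beta>" by (simp add: t_def algebra_simps)
  have ft: "frac t = t - \<lfloor>t\<rfloor>" by (simp add: frac_def)
  have f0: "0 \<le> frac t" "frac t < 1" by (simp_all add: frac_lt_1)
  show ?thesis
  proof (cases "1 - \<beta> \<le> frac t")
    case True
    have "\<lfloor>t + \<beta>\<rfloor> = \<lfloor>t\<rfloor> + 1" unfolding floor_eq_iff using True f0 ft assms by simp linarith?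
    then show ?thesis unfolding e using True f0 by (simp add: sturm_pot_def t_def[symmetric] indicator_def)
  next
    case False
    have "of_int \<lfloor>t\<rfloor> \<le> t" by (rule of_int_floor_le)
    then have "\<lfloor>t + \<beta>\<rfloor> = \<lfloor>t\<rfloor>" unfolding floor_eq_iff using False f0 ft assms by linarith
    then show ?thesis unfolding e using False by (simp add: sturm_pot_def t_def[symmetric] indicator_def)
  qed
qed

lemma floor_stable:
  fixes T :: "real set"
  assumes "finite T"
  shows "\<exists>\<eta>>0. \<forall>t\<in>T. \<forall>\<delta>. 0 \<le> \<delta> \<and> \<delta> < \<eta> \<longrightarrow> \<lfloor>t + \<delta>\<rfloor> = \<lfloor>t\<rfloor>"
  using assms
proof (induction T rule: finite_induct)
  case empty
  then show ?case by (intro exI[of _ 1]) simp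
next
  case (insert x T)
  then obtain \<eta> where \<eta>: "\<eta> > 0" "\<forall>t\<in>T. \<forall>\<delta>. 0 \<le> \<delta> \<and> \<delta> < \<eta> \<longrightarrow> \<lfloor>t + \<delta>\<rfloor> = \<lfloor>t\<rfloor>" by blast
  define \<eta>' where "\<eta>' = min \<eta> (of_int \<lfloor>x\<rfloor> + 1 - x)"
  have "\<eta>' > 0" using \<eta> by (simp add: \<eta>'_def)
  moreover have "\<lfloor>x + \<delta>\<rfloor> = \<lfloor>x\<rfloor>" if "0 \<le> \<delta>" "\<delta> < \<eta>'" for \<delta>
  proof -
    have "of_int \<lfloor>x\<rfloor> \<le> x" by (rule of_int_floor_le)
    moreover have "\<delta> < of_int \<lfloor>x\<rfloor> + 1 - x" using that by (simp add: \<eta>'_def)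
    ultimately show ?thesis unfolding floor_eq_iff using that by linarith
  qed
  ultimately show ?case using \<eta> by (intro exI[of _ \<eta>']) (auto simp: \<eta>'_def)
qed

lemma density:
  fixes \<alpha> s \<eta> :: real
  assumes "\<alpha> \<notin> \<rat>" "\<eta> > 0"
  obtains k j :: int where "s \<le> k * \<alpha> - j" "k * \<alpha> - j < s + \<eta>"
proof -
  have e2: "\<eta>/2 > 0" using assms(2) by simp
  obtain h k :: int where "k > 0" "\<bar>of_int k * \<alpha> - of_int h - (s + \<eta>/2)\<bar> < \<eta>/2"
    by (rule sequence_of_fractional_parts_is_dense[OF assms(1) e2, where \<alpha> = "s + \<eta>/2"])
  then have "- (\<eta>/2) < of_int k * \<alpha> - of_int h - (s + \<eta>/2)" "of_int k * \<alpha> - of_int h - (s + \<eta>/2) < \<eta>/2"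
    unfolding abs_less_iff by linarith+
  then have "s \<le> of_int k * \<alpha> - of_int h" "of_int k * \<alpha> - of_int h < s + \<eta>" by linarith+
  then show ?thesis by (rule that)
qed

lemma floor_rat_stable:
  fixes N q :: int and \<delta> :: real
  assumes "q > 0" "0 \<le> \<delta>" "\<delta> < 1 / q"
  shows "\<lfloor>of_int N / of_int q + \<delta>\<rfloor> = \<lfloor>of_int N / of_int q :: real\<rfloor>"
proof -
  define f where "f = \<lfloor>of_int N / of_int q :: real\<rfloor>"
  have "of_int N / of_int q < (of_int f + 1 :: real)" unfolding f_def by linarith
  then have "of_int N < (of_int f + 1) * (of_int q :: real)" using assms by (simp add: divide_less_eq)
  then have "N < (f + 1) * q" by (metis of_int_add of_int_less_iff of_int_mult of_int_1)
  then have "N + 1 \<le> (f + 1) * q" by simp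
  then have "of_int N + 1 \<le> (of_int f + 1) * (of_int q :: real)" by (metis of_int_add of_int_le_iff of_int_mult of_int_1)
  then have "of_int N / of_int q + 1 / of_int q \<le> (of_int f + 1 :: real)" using assms
    by (simp add: field_simps)
  then have "of_int N / of_int q + \<delta> < of_int f + 1" using assms by linarith
  moreover have "of_int f \<le> of_int N / of_int q + \<delta>" unfolding f_def using assms by linarith
  ultimately show ?thesis unfolding f_def[symmetric] floor_eq_iff by simp
qed

context
  fixes \<alpha> \<theta> :: real
  assumes a0: "0 < \<alpha>" and a1: "\<alpha> < 1" and ai: "\<alpha> \<notin> \<rat>"
begin

lemma approx_err': 
  assumes "m \<ge> 1"
  shows "\<bar>\<alpha> - cf_approx \<alpha> m\<bar> \<le> 1 / real m"
proof -
  obtain m' where m: "m = Suc m'" using assms by (cases m) auto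
  have q1: "real_of_int (cf_q \<alpha> m) \<ge> real m" using q_ge[OF a0 a1 ai, of m] by linarith
  have qp: "real_of_int (cf_q \<alpha> m) \<ge> 1" using q_pos[OF a0 a1 ai, of m] by simp
  have "\<bar>\<alpha> - cf_approx \<alpha> m\<bar> \<le> 1 / (real_of_int (cf_q \<alpha> m))^2" using approx_err[OF a0 a1 ai, of m'] m by simp
  also have "\<dots> \<le> 1 / real_of_int (cf_q \<alpha> m)" using qp by (simp add: power2_eq_square divide_simps)
  also have "\<dots> \<le> 1 / real m" using q1 assms by (simp add: frac_le)
  finally show ?thesis .
qed

lemma pattern_a:
  fixes a b :: int
  shows "\<exists>M. \<forall>m\<ge>M. \<exists>k. \<forall>n\<in>{a..b}. sturm_pot (cf_approx \<alpha> m) 0 (n + k) = sturm_pot \<alpha> \<theta> n"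
proof -
  define T where "T = (\<lambda>n. of_int n * \<alpha> + \<theta>) ` {a..b+1}"
  have "finite T" by (simp add: T_def)
  from floor_stable[OF this] obtain \<eta> where \<eta>0: "\<eta> > 0" and H: "\<forall>t\<in>T. \<forall>\<delta>. 0 \<le> \<delta> \<and> \<delta> < \<eta> \<longrightarrow> \<lfloor>t + \<delta>\<rfloor> = \<lfloor>t\<rfloor>"
    by blast
  have \<eta>: "\<eta> > 0" "\<And>t \<delta>. t \<in> T \<Longrightarrow> 0 \<le> \<delta> \<Longrightarrow> \<delta> < \<eta> \<Longrightarrow> \<lfloor>t + \<delta>\<rfloor> = \<lfloor>t\<rfloor>"
    using \<eta>0 H by auto
  define B where "B = real_of_int (\<bar>a\<bar> + \<bar>b + 1\<bar>) + 1"
  have B1: "B \<ge> 1" by (simp add: B_def)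
  obtain M :: nat where M: "real M > 3 * B / \<eta>" using reals_Archimedean2 by blast
  have "\<forall>m\<ge>Suc M. \<exists>k. \<forall>n\<in>{a..b}. sturm_pot (cf_approx \<alpha> m) 0 (n + k) = sturm_pot \<alpha> \<theta> n"
  proof (intro allI impI)
    fix m assume mM: "m \<ge> Suc M"
    have m1: "m \<ge> 1" using mM by simp
    have "3 * B / \<eta> < real m" using M mM by simp
    then have mB: "3 * B < real m * \<eta>" using \<eta> by (simp add: divide_less_eq)
    have err: "\<bar>\<alpha> - cf_approx \<alpha> m\<bar> \<le> 1 / real m" by (rule approx_err'[OF m1])
    have q1: "real_of_int (cf_q \<alpha> m) \<ge> real m" using q_ge[OF a0 a1 ai, of m] by linarith
    have mpos: "real m > 0" using m1 by simp
    have qinv: "1 / real_of_int (cf_q \<alpha> m) < \<eta> / 3"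
    proof -
      have "1 / real_of_int (cf_q \<alpha> m) \<le> 1 / real m" using q1 mpos by (simp add: frac_le)
      also have "\<dots> < \<eta> / 3"
      proof -
        have "3 < real m * \<eta>" using mB B1 by linarith
        then show ?thesis using mpos by (simp add: divide_simps mult.commute)
      qed
      finally show ?thesis .
    qed
    have Berr: "B * \<bar>\<alpha> - cf_approx \<alpha> m\<bar> < \<eta> / 3"
    proof -
      have "B * \<bar>\<alpha> - cf_approx \<alpha> m\<bar> \<le> B * (1 / real m)" using err B1 by (intro mult_left_mono) auto
      also have "\<dots> < \<eta> / 3" using mB mpos by (simp add: field_simps mult.commute)
      finally show ?thesis .
    qed
    obtain k j :: int where kj: "\<theta> + \<eta>/3 \<le> k * cf_approx \<alpha> m - j"
      "k * cf_approx \<alpha> m - j < \<theta> + \<eta>/3 + 1 / cf_q \<alpha> m"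
      by (rule mesh[OF a0 a1 ai])
    have fl: "\<lfloor>of_int (n + k) * cf_approx \<alpha> m\<rfloor> = \<lfloor>of_int n * \<alpha> + \<theta>\<rfloor> + j" if n: "n \<in> {a..b+1}" for n
    proof -
      define \<delta> where "\<delta> = of_int n * (cf_approx \<alpha> m - \<alpha>) + (k * cf_approx \<alpha> m - j - \<theta>)"
      have nb: "\<bar>real_of_int n\<bar> \<le> B" using n by (auto simp: B_def)
      have "\<bar>of_int n * (cf_approx \<alpha> m - \<alpha>)\<bar> \<le> B * \<bar>\<alpha> - cf_approx \<alpha> m\<bar>"
        unfolding abs_mult using nb by (simp add: abs_minus_commute mult_right_mono)
      then have "\<bar>of_int n * (cf_approx \<alpha> m - \<alpha>)\<bar> < \<eta> / 3" using Berr by linarith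
      then have d0: "0 \<le> \<delta>" and d1: "\<delta> < \<eta>" using kj qinv unfolding \<delta>_def by (auto simp: abs_less_iff)
      have "of_int (n + k) * cf_approx \<alpha> m = (of_int n * \<alpha> + \<theta> + \<delta>) + of_int j"
        by (simp add: \<delta>_def algebra_simps)
      then have "\<lfloor>of_int (n + k) * cf_approx \<alpha> m\<rfloor> = \<lfloor>of_int n * \<alpha> + \<theta> + \<delta>\<rfloor> + j" by simp
      also have "\<lfloor>of_int n * \<alpha> + \<theta> + \<delta>\<rfloor> = \<lfloor>of_int n * \<alpha> + \<theta>\<rfloor>"
      proof -
        have "of_int n * \<alpha> + \<theta> \<in> T" using n unfolding T_def by (rule imageI)
        then show ?thesis by (rule \<eta>(2)[OF _ d0 d1])
      qed
      finally show ?thesis .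
    qed
    have "sturm_pot (cf_approx \<alpha> m) 0 (n + k) = sturm_pot \<alpha> \<theta> n" if n: "n \<in> {a..b}" for n
    proof -
      have "sturm_pot (cf_approx \<alpha> m) 0 (n + k) = of_int (\<lfloor>of_int ((n + 1) + k) * cf_approx \<alpha> m\<rfloor> - \<lfloor>of_int (n + k) * cf_approx \<alpha> m\<rfloor>)"
        using pot_floor[OF approx_01[OF a0 a1 ai, of m], of 0 "n + k"] by (simp add: ac_simps)
      also have "\<dots> = of_int ((\<lfloor>of_int (n + 1) * \<alpha> + \<theta>\<rfloor> + j) - (\<lfloor>of_int n * \<alpha> + \<theta>\<rfloor> + j))"
        using fl[of n] fl[of "n + 1"] n by simp
      also have "\<dots> = sturm_pot \<alpha> \<theta> n" using pot_floor[of \<alpha> \<theta> n] a0 a1 by simp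
      finally show ?thesis .
    qed
    then show "\<exists>k. \<forall>n\<in>{a..b}. sturm_pot (cf_approx \<alpha> m) 0 (n + k) = sturm_pot \<alpha> \<theta> n" by blast
  qed
  then show ?thesis by blast
qed

lemma pattern_b:
  fixes L :: nat
  shows "\<exists>M. \<forall>m\<ge>M. \<forall>c. \<exists>k. \<forall>n\<in>{c..c + int L}. sturm_pot \<alpha> \<theta> (n + k) = sturm_pot (cf_approx \<alpha> m) 0 n"
proof -
  have "\<forall>m\<ge>4 * L + 5. \<forall>c. \<exists>k. \<forall>n\<in>{c..c + int L}. sturm_pot \<alpha> \<theta> (n + k) = sturm_pot (cf_approx \<alpha> m) 0 n"
  proof (intro allI impI)
    fix m c assume mM: "m \<ge> 4 * L + 5"
    obtain m' where m: "m = Suc m'" using mM by (cases m) auto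
    define q where "q = cf_q \<alpha> m"
    define p where "p = cf_p \<alpha> m"
    have qm: "q \<ge> int m" using q_ge[OF a0 a1 ai, of m] by (simp add: q_def)
    have "real_of_int (int m) \<le> real_of_int q" using qm by (simp only: of_int_le_iff)
    then have "real m \<le> real_of_int q" by simp
    moreover have "real m \<ge> 4 * real L + 5" using mM by simp
    ultimately have qL: "real_of_int q > 4 * real L + 4" by linarith
    have qp: "real_of_int q > 0" using qL by linarith
    have am: "cf_approx \<alpha> m = of_int p / of_int q" by (simp add: cf_approx_def p_def q_def)
    have err: "\<bar>\<alpha> - cf_approx \<alpha> m\<bar> \<le> 1 / (real_of_int q)^2" using approx_err[OF a0 a1 ai, of m'] m by (simp add: q_def)
    have Lerr: "(real L + 1) * \<bar>\<alpha> - cf_approx \<alpha> m\<bar> < 1 / (4 * real_of_int q)"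
    proof -
      have "(real L + 1) * \<bar>\<alpha> - cf_approx \<alpha> m\<bar> \<le> (real L + 1) * (1 / (real_of_int q)^2)"
        using err by (intro mult_left_mono) auto
      also have "\<dots> < 1 / (4 * real_of_int q)" using qL qp by (simp add: divide_simps power2_eq_square)
      finally show ?thesis .
    qed
    have qpos4: "1 / (4 * real_of_int q) > 0" using qp by simp
    obtain K j :: int where Kj: "of_int c * cf_approx \<alpha> m - \<theta> + 1 / (4 * real_of_int q) \<le> K * \<alpha> - j"
      "K * \<alpha> - j < of_int c * cf_approx \<alpha> m - \<theta> + 1 / (4 * real_of_int q) + 1 / (4 * real_of_int q)"
      by (rule density[OF ai qpos4])
    define k where "k = K - c"
    have fl: "\<lfloor>of_int (n + k) * \<alpha> + \<theta>\<rfloor> = \<lfloor>of_int n * cf_approx \<alpha> m\<rfloor> + j" if n: "n \<in> {c..c + int L + 1}" for n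
    proof -
      define X where "X = K * \<alpha> + \<theta> - j - of_int c * cf_approx \<alpha> m"
      define \<delta> where "\<delta> = X + of_int (n - c) * (\<alpha> - cf_approx \<alpha> m)"
      have nb: "\<bar>real_of_int (n - c)\<bar> \<le> real L + 1" using n by auto
      have "\<bar>of_int (n - c) * (\<alpha> - cf_approx \<alpha> m)\<bar> \<le> (real L + 1) * \<bar>\<alpha> - cf_approx \<alpha> m\<bar>"
        unfolding abs_mult using nb by (simp add: mult_right_mono)
      then have "\<bar>of_int (n - c) * (\<alpha> - cf_approx \<alpha> m)\<bar> < 1 / (4 * real_of_int q)" using Lerr by linarith
      then have d0: "0 \<le> \<delta>" and d1: "\<delta> < 1 / q" using Kj qp unfolding \<delta>_def X_def by (auto simp: abs_less_iff)
      have "of_int (n + k) * \<alpha> + \<theta> = of_int n * cf_approx \<alpha> m + \<delta> + of_int j"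
        by (simp add: \<delta>_def X_def k_def algebra_simps)
      then have "\<lfloor>of_int (n + k) * \<alpha> + \<theta>\<rfloor> = \<lfloor>of_int n * cf_approx \<alpha> m + \<delta>\<rfloor> + j" by simp
      also have "of_int n * cf_approx \<alpha> m = of_int (n * p) / of_int q" by (simp add: am)
      also have "\<lfloor>of_int (n * p) / of_int q + \<delta>\<rfloor> = \<lfloor>of_int (n * p) / (of_int q :: real)\<rfloor>"
        using floor_rat_stable[of q \<delta> "n * p"] qp d0 d1 by simp
      finally show ?thesis by (simp add: am)
    qed
    have "sturm_pot \<alpha> \<theta> (n + k) = sturm_pot (cf_approx \<alpha> m) 0 n" if n: "n \<in> {c..c + int L}" for n
    proof -
      have "sturm_pot \<alpha> \<theta> (n + k) = of_int (\<lfloor>of_int ((n + 1) + k) * \<alpha> + \<theta>\<rfloor> - \<lfloor>of_int (n + k) * \<alpha> + \<theta>\<rfloor>)"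
        using pot_floor[of \<alpha> \<theta> "n + k"] a0 a1 by (simp add: ac_simps)
      also have "\<dots> = of_int ((\<lfloor>of_int (n + 1) * cf_approx \<alpha> m\<rfloor> + j) - (\<lfloor>of_int n * cf_approx \<alpha> m\<rfloor> + j))"
        using fl[of n] fl[of "n + 1"] n by simp
      also have "\<dots> = sturm_pot (cf_approx \<alpha> m) 0 n" using pot_floor[OF approx_01[OF a0 a1 ai, of m], of 0 n] by simp
      finally show ?thesis .
    qed
    then show "\<exists>k. \<forall>n\<in>{c..c + int L}. sturm_pot \<alpha> \<theta> (n + k) = sturm_pot (cf_approx \<alpha> m) 0 n" by blast
  qed
  then show ?thesis by blast
qed

end


lemma fsupp_mem: "1 \<le> p \<Longrightarrow> fsupp S y \<Longrightarrow> lp_mem p y"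
  by (cases "p = \<infinity>") (auto intro: lp_fin(1) lp_inf_mem fsupp_bdd)

lemma FL:
  assumes p1: "1 \<le> p" and e0: "\<epsilon> > 0"
  shows "\<exists>L::nat. \<forall>v. bnd v \<longrightarrow> (\<exists>c y. fsupp {c..c + int L} y \<and> lp_norm p y > 0 \<and>
      lp_norm p (Aop lam E v y) / lp_norm p y \<le> nu p lam E v + \<epsilon>)"
proof (cases "p = \<infinity>")
  case True
  then show ?thesis using F_inf[OF e0] by blast
next
  case False
  define r where "r = real_of_ereal p"
  have r1: "r \<ge> 1" using real_p_ge1[OF p1 False] by (simp add: r_def)
  have e2: "\<epsilon> / 2 > 0" using e0 by simp
  obtain L0 :: nat where L0: "real L0 > 2 powr (r + 3) / (\<epsilon> / 2) powr r" using reals_Archimedean2 by blast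
  have L0pos: "L0 > 0"
  proof -
    have "2 powr (r + 3) / (\<epsilon> / 2) powr r > 0" using e2 by simp
    then show ?thesis using L0 by (cases L0) auto
  qed
  have keyL: "(2 powr (r + 3) / real L0) powr (1 / r) \<le> \<epsilon> / 2"
  proof -
    have "2 powr (r + 3) / real L0 \<le> (\<epsilon> / 2) powr r"
      using L0 L0pos e2 by (simp add: divide_simps mult.commute)
    then have "(2 powr (r + 3) / real L0) powr (1 / r) \<le> ((\<epsilon> / 2) powr r) powr (1 / r)"
      using r1 by (intro powr_mono2) auto
    also have "\<dots> = \<epsilon> / 2" using r1 e2 by (simp add: powr_powr)
    finally show ?thesis .
  qed
  have "\<forall>v. bnd v \<longrightarrow> (\<exists>c y. fsupp {c..c + int (2 * L0)} y \<and> lp_norm p y > 0 \<and>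
      lp_norm p (Aop lam E v y) / lp_norm p y \<le> nu p lam E v + \<epsilon>)"
  proof (intro allI impI)
    fix v assume bv: "bnd v"
    obtain a b y where y: "fsupp {a..b} y" "lp_norm p y > 0"
      "lp_norm p (Aop lam E v y) / lp_norm p y \<le> nu p lam E v + \<epsilon> / 2"
      using F_fin[OF False p1 bv e2, of lam E] by blast
    obtain j z where z: "fsupp {j * int L0 - int L0..j * int L0 + int L0} z" "lp_norm p z > 0"
      "lp_norm p (Aop lam E v z) / lp_norm p z \<le> lp_norm p (Aop lam E v y) / lp_norm p y
           + (2 powr (real_of_ereal p + 3) / real L0) powr (1 / real_of_ereal p)"
      using Loc_core[OF False p1 L0pos bv y(1) y(2), of lam E] by blast
    have "lp_norm p (Aop lam E v z) / lp_norm p z \<le> nu p lam E v + \<epsilon>"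
      using z(3) y(3) keyL by (simp add: r_def)
    moreover have "fsupp {(j * int L0 - int L0)..(j * int L0 - int L0) + int (2 * L0)} z" using z(1) by (simp add: add.commute)
    ultimately show "\<exists>c y. fsupp {c..c + int (2 * L0)} y \<and> lp_norm p y > 0 \<and>
      lp_norm p (Aop lam E v y) / lp_norm p y \<le> nu p lam E v + \<epsilon>" using z(2) by blast
  qed
  then show ?thesis by blast
qed

lemma transfer:
  assumes p1: "1 \<le> p" and bw: "bnd w" and fs: "fsupp S y" and yp: "lp_norm p y > 0"
    and pat: "\<forall>n\<in>S. w (n + k) = v n"
  shows "nu p lam E w \<le> lp_norm p (Aop lam E v y) / lp_norm p y"
proof -
  define y' where "y' = (\<lambda>n. y (n - k))"
  have m: "lp_mem p y'" using fsupp_mem[OF p1 fs] lp_shift(2)[of p y k] by (simp add: y'_def)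
  have n: "lp_norm p y' = lp_norm p y" using lp_shift(1)[of p y k] by (simp add: y'_def)
  have A: "Aop lam E w y' = (\<lambda>n. Aop lam E v y (n - k))" unfolding y'_def by (rule Aop_shift[OF pat fs])
  have "nu p lam E w \<le> lp_norm p (Aop lam E w y') / lp_norm p y'"
    by (rule nu_le[OF p1 bw m]) (simp add: n yp)
  also have "\<dots> = lp_norm p (Aop lam E v y) / lp_norm p y" unfolding A n by (simp add: lp_shift)
  finally show ?thesis .
qed

theorem lemma5p10:
  fixes p :: ereal and \<alpha> \<theta> lam E :: real
  assumes "1 \<le> p"
    and "0 \<le> \<alpha>" "\<alpha> \<le> 1" "\<alpha> \<notin> \<rat>"
    and "0 \<le> \<theta>" "\<theta> < 1"
  shows "(\<lambda>m. lower_norm p (sturm_A lam (cf_approx \<alpha> m) 0 E))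
           \<longlonglongrightarrow> lower_norm p (sturm_A lam \<alpha> \<theta> E)"
proof -
  note p1 = assms(1)
  have a0: "0 < \<alpha>" using assms(2,4) by (cases "\<alpha> = 0") auto
  have a1: "\<alpha> < 1" using assms(3,4) by (cases "\<alpha> = 1") auto
  have ai: "\<alpha> \<notin> \<rat>" by fact
  define v where "v = sturm_pot \<alpha> \<theta>"
  define vm where "vm = (\<lambda>m. sturm_pot (cf_approx \<alpha> m) 0)"
  have bv: "bnd v" by (simp add: v_def sturm_pot_bnd)
  have bvm: "bnd (vm m)" for m by (simp add: vm_def sturm_pot_bnd)
  have eq1: "lower_norm p (sturm_A lam (cf_approx \<alpha> m) 0 E) = nu p lam E (vm m)" for m
    by (simp add: nu_def sturm_A_Aop vm_def)
  have eq2: "lower_norm p (sturm_A lam \<alpha> \<theta> E) = nu p lam E v"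
    by (simp add: nu_def sturm_A_Aop v_def)
  show ?thesis unfolding eq1 eq2
  proof (rule LIMSEQ_I)
    fix \<epsilon> :: real assume e0: "\<epsilon> > 0"
    define e where "e = \<epsilon> / 2"
    have e: "e > 0" using e0 by (simp add: e_def)
    obtain L :: nat where L: "\<And>w. bnd w \<Longrightarrow> \<exists>c y. fsupp {c..c + int L} y \<and> lp_norm p y > 0 \<and>
      lp_norm p (Aop lam E w y) / lp_norm p y \<le> nu p lam E w + e"
      using FL[OF p1 e, of lam E] by blast
    obtain c y where y: "fsupp {c..c + int L} y" "lp_norm p y > 0"
      "lp_norm p (Aop lam E v y) / lp_norm p y \<le> nu p lam E v + e" using L[OF bv] by blast
    obtain M1 where M1: "\<And>m. m \<ge> M1 \<Longrightarrow> \<exists>k. \<forall>n\<in>{c..c + int L}. vm m (n + k) = v n"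
      using pattern_a[OF a0 a1 ai, where \<theta>=\<theta> and a=c and b="c + int L"] unfolding vm_def v_def by blast
    obtain M2 where M2: "\<And>m c. m \<ge> M2 \<Longrightarrow> \<exists>k. \<forall>n\<in>{c..c + int L}. v (n + k) = vm m n"
      using pattern_b[OF a0 a1 ai, where \<theta>=\<theta> and L=L] unfolding vm_def v_def by blast
    have "norm (nu p lam E (vm m) - nu p lam E v) < \<epsilon>" if m: "m \<ge> max M1 M2" for m
    proof -
      obtain k where k: "\<forall>n\<in>{c..c + int L}. vm m (n + k) = v n" using M1[of m] m by auto
      have up: "nu p lam E (vm m) \<le> nu p lam E v + e"
        using transfer[OF p1 bvm y(1) y(2) k, of lam E] y(3) by linarith
      obtain c' y' where y': "fsupp {c'..c' + int L} y'" "lp_norm p y' > 0"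
        "lp_norm p (Aop lam E (vm m) y') / lp_norm p y' \<le> nu p lam E (vm m) + e" using L[OF bvm] by blast
      obtain k' where k': "\<forall>n\<in>{c'..c' + int L}. v (n + k') = vm m n" using M2[of m c'] m by auto
      have lo: "nu p lam E v \<le> nu p lam E (vm m) + e"
        using transfer[OF p1 bv y'(1) y'(2) k', of lam E] y'(3) by linarith
      show ?thesis using up lo e0 by (simp add: e_def abs_if)
    qed
    then show "\<exists>no. \<forall>m\<ge>no. norm (nu p lam E (vm m) - nu p lam E v) < \<epsilon>" by blast
  qed
qed


end
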